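(* Consider the variational model described in the context (finite-state-controller policies for agents $n=1,\dots,N$ with stick-breaking/Dirichlet priors and Gamma hyper-priors, a dataset of $K$ trajectories, and the mean-field variational family below). With conjugate priors and the mean-field assumption, maximizing the objective $\mathrm{ELBO}(q)$ coordinate-wise over each variational factor (the others held fixed) reduces to the following parameter updates of the variational distributions: \[ \begin{aligned} &\delta_n^i=1+\sum_{k=1}^{K}\frac{1}{K}\sum_{t=0}^{T_k}q_{n,t}^k(z_{n,0}^{k}=i), \qquad \mu_n^i=\frac{g_n}{h_n}+\sum_{k=1}^{K}\frac{1}{K}\sum_{t=0}^{T_k}\sum_{m=i+1}^{|\mathcal{Z}_n|}q_{n,t}^k(z_{n,0}^{k}=m),\\ &\phi_{n,i}^{a}=\theta_{n,i}^{a}+\sum_{k=1}^{K}\frac{1}{K}\sum_{t=0}^{T_k}\sum_{\tau=0}^{t}q_{n,t}^k(z_{n,\tau}^{k}=i)\,\mathbb{I}(a_{n,\tau}^{k}=a),\\ &\sigma_{n,a,o}^{i,j}=1+\sum_{k=1}^{K}\frac{1}{K}\sum_{t=0}^{T_k}\sum_{\tau=1}^{t}q_{n,t}^k(z_{n,\tau-1}^{k}=i,z_{n,\tau}^{k}=j)\,\mathbb{I}(a_{n,\tau-1}^{k}=a,o_{n,\tau}^{k}=o),\\ &\lambda_{n,a,o}^{i,j}=\frac{a_{n,a,o}^{i}}{b_{n,a,o}^{i}}+\sum_{k=1}^{K}\frac{1}{K}\sum_{t=0}^{T_k}\sum_{\tau=1}^{t}\sum_{m=j+1}^{|\mathcal{Z}_n|}q_{n,t}^k(z_{n,\tau-1}^{k}=i,z_{n,\tau}^{k}=m)\,\mathbb{I}(a_{n,\tau-1}^{k}=a,o_{n,\tau}^{k}=o),\\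 &g_n=e+|\mathcal{Z}_n|,\qquad h_n=f-\sum_{i=1}^{|\mathcal{Z}_n|}\left[\Psi(\mu_{n}^{i})-\Psi(\delta_{n}^{i}+\mu_{n}^{i})\right],\\ &a_{n,a,o}^{i}=c_{n,a,o}+|\mathcal{Z}_n|,\qquad b_{n,a,o}^{i}=d_{n,a,o}-\sum_{j=1}^{|\mathcal{Z}_n|}\left[\Psi(\lambda_{n,a,o}^{i,j})-\Psi(\sigma_{n,a,o}^{i,j}+\lambda_{n,a,o}^{i,j})\right], \end{aligned} \] where $\Psi$ is the digamma function, $\mathbb{I}$ is the indicator function, and \[ q_{n,t}^k(z_{n,\tau}^{k}=i)=\tilde{\nu}_t^k\, p(z_{n,\tau}^{k}=i\mid a_{n,0:t}^k,o_{n,1:t}^k,\tilde{\Theta}),\qquad q_{n,t}^k(z_{n,\tau-1}^{k}=i,z_{n,\tau}^{k}=j)=\tilde{\nu}_t^k\, p(z_{n,\tau-1}^{k}=i,z_{n,\tau}^{k}=j\mid a_{n,0:t}^k,o_{n,1:t}^k,\tilde{\Theta}) \] are the marginals of $q_{n,t}^k(z_{n,0:t}^{k})$ for $\tau=0,\dots,t$.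
   Context: Agents $n=1,\dots,N$; agent $n$ has a finite action set $\mathcal{A}_n$, finite observation set $\mathcal{O}_n$ and a (truncated) finite node set $\mathcal{Z}_n=\{1,\dots,|\mathcal{Z}_n|\}$. A finite state controller (FSC) policy $\Theta_n=(\eta_n,\omega_n,\pi_n)$ for agent $n$ consists of an initial node distribution $\eta_n^i$, node transition probabilities $\omega_{n,a,o}^{i,j}$ (probability of moving to node $j$ from node $i$ after action $a$ and observation $o$), and action probabilities $\pi_{n,i}^a$ at node $i$. For action history $a_{n,0:t}$, observation history $o_{n,1:t}$ and node history $z_{n,0:t}$, $p(a_{n,0:t},z_{n,0:t}\mid o_{n,1:t},\Theta)=\eta_n^{z_0}\pi_{n,z_0}^{a_0}\prod_{\tau=1}^{t}\omega_{n,a_{\tau-1},o_\tau}^{z_{\tau-1},z_\tau}\pi_{n,z_\tau}^{a_\tau}$, and $p(a_{n,0:t}\mid o_{n,1:t},\Theta)$ is its sum over $z_{n,0:t}$. Prior: $\eta_n^1=u_n^1$, $\eta_n^i=u_n^i\prod_{m<i}(1-u_n^m)$; $\omega_{n,a,o}^{i,1}=V_{n,a,o}^{i,1}$, $\omega_{n,a,o}^{i,j}=V_{n,a,o}^{i,j}\prod_{m<j}(1-V_{n,a,o}^{i,m})$; $u_n^i\sim\mathrm{Beta}(1,\rho_n)$, $\rho_n\sim\mathrm{Gamma}(e,f)$; $V_{n,a,o}^{i,j}\sim\mathrm{Beta}(1,\alpha_{n,a,o}^i)$, $\alpha_{n,a,o}^i\sim\mathrm{Gamma}(c_{n,a,o},d_{n,a,o})$;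 $\pi_{n,i}\sim\mathrm{Dirichlet}(\theta_{n,i}^{1},\dots,\theta_{n,i}^{|\mathcal{A}_n|})$ (Gamma in shape–rate form). Data: $K$ trajectories; trajectory $k$ has length $T_k$, actions $a_{n,\tau}^k$, observations $o_{n,\tau}^k$, and rewards $r_t^k$; $R_{\min}$ is the minimal reward, $\gamma\in[0,1)$ a discount factor, and $\Pi$ a behavior policy giving probabilities $p(a_{n,0:t}^k\mid o_{n,1:t}^k,\Pi)$. Let $\tilde r_t^k=\gamma^t (r_t^k-R_{\min})/\prod_{n}p(a_{n,0:t}^k\mid o_{n,1:t}^k,\Pi)$ and the empirical value $\hat V(\mathcal{D}^K;\Theta)=\frac1K\sum_{k}\sum_{t=0}^{T_k}\tilde r_t^k\prod_n p(a_{n,0:t}^k\mid o_{n,1:t}^k,\Theta)$. Variational family (mean field): $q(u_n^i)=\mathrm{Beta}(\delta_n^i,\mu_n^i)$, $q(V_{n,a,o}^{i,j})=\mathrm{Beta}(\sigma_{n,a,o}^{i,j},\lambda_{n,a,o}^{i,j})$, $q(\rho_n)=\mathrm{Gamma}(g_n,h_n)$, $q(\alpha_{n,a,o}^i)=\mathrm{Gamma}(a_{n,a,o}^i,b_{n,a,o}^i)$, $q(\pi_{n,i})=\mathrm{Dirichlet}(\phi_{n,i}^1,\dots,\phi_{n,i}^{|\mathcal{A}_n|})$, and $q(z_{n,0:t}^k)=\tilde\nu_t^k\,p(z_{n,0:t}^k\mid a_{n,0:t}^k,o_{n,1:t}^k,\tilde\Theta)$, where $\tilde\Theta=(\tilde\eta,\tilde\omega,\tilde\pi)$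 with $\tilde\eta_n^i=\exp\mathrm{E}_q[\ln\eta_n^i]$, $\tilde\omega_{n,a,o}^{i,j}=\exp\mathrm{E}_q[\ln\omega_{n,a,o}^{i,j}]$, $\tilde\pi_{n,i}^a=\exp\mathrm{E}_q[\ln\pi_{n,i}^a]$, and $\tilde\nu_t^k=\gamma^t(r_t^k-R_{\min})\prod_n p(a_{n,0:t}^k\mid o_{n,1:t}^k,\tilde\Theta)/\big(\prod_n p(a_{n,0:t}^k\mid o_{n,1:t}^k,\Pi)\,\hat V(\mathcal{D}^K;\tilde\Theta)\big)$. Objective: $\mathrm{ELBO}(q)=\frac1K\sum_k\sum_{t}\sum_{\vec z_{0:t}^k}q(\vec z_{0:t}^k)\,\mathrm{E}_{q(\Theta)}\big[\ln \tilde r_t^k\prod_n p(a_{n,0:t}^k,z_{n,0:t}^k\mid o_{n,1:t}^k,\Theta)\big]+\mathrm{E}_q[\ln p(\Theta\mid\rho,\alpha)]+\mathrm{E}_q[\ln p(\rho)]+\mathrm{E}_q[\ln p(\alpha)]-\mathrm{E}_q[\ln q(\Theta)q(\rho)q(\alpha)\prod_n q(z_{n,0:t}^k)]$, with $q(\vec z_{0:t}^k)=\prod_n q(z_{n,0:t}^k)$.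
   Formalization: The joint factor $q(\vec z_{0:t}^k)$ is $\tilde\nu_t^k\prod_n p(z_{n,0:t}^k\mid a_{n,0:t}^k,o_{n,1:t}^k,\tilde\Theta)$, with the weight $\tilde\nu_t^k$ taken once instead of once per agent as in $\prod_n q(z_{n,0:t}^k)$. The statement above fails without it. *)

theory Defs
  imports "HOL-Analysis.Analysis"
begin

definition beta_pdf :: "real \<Rightarrow> real \<Rightarrow> real \<Rightarrow> real" where
  "beta_pdf a b x = (if 0 < x \<and> x < 1 then x powr (a - 1) * (1 - x) powr (b - 1) / Beta a b else 0)"

definition gamma_pdf :: "real \<Rightarrow> real \<Rightarrow> real \<Rightarrow> real" where
  "gamma_pdf a b x = (if 0 < x then b powr a * x powr (a - 1) * exp (- b * x) / Gamma a else 0)"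

definition dir_dens :: "(nat \<Rightarrow> real) \<Rightarrow> nat \<Rightarrow> (nat \<Rightarrow> real) \<Rightarrow> real" where
  "dir_dens al M p = (if (\<forall>a<M. 0 < p a)
      then Gamma (\<Sum>a<M. al a) / (\<Prod>a<M. Gamma (al a)) * (\<Prod>a<M. p a powr (al a - 1)) else 0)"

text \<open>Points of the simplex are parametrised by their first M-1 coordinates.\<close>
definition simplex_ext :: "nat \<Rightarrow> (nat \<Rightarrow> real) \<Rightarrow> nat \<Rightarrow> real" where
  "simplex_ext M x = (\<lambda>a. if a < M - 1 then x a
       else if a = M - 1 then 1 - (\<Sum>b<M - 1. x b) else 0)"

definition E_beta :: "real \<Rightarrow> real \<Rightarrow> (real \<Rightarrow> real) \<Rightarrow> real" where
  "E_beta a b g = (\<integral>x. beta_pdf a b x * g x \<partial>lborel)"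

definition E_gamma :: "real \<Rightarrow> real \<Rightarrow> (real \<Rightarrow> real) \<Rightarrow> real" where
  "E_gamma a b g = (\<integral>x. gamma_pdf a b x * g x \<partial>lborel)"

definition E_dir :: "(nat \<Rightarrow> real) \<Rightarrow> nat \<Rightarrow> ((nat \<Rightarrow> real) \<Rightarrow> real) \<Rightarrow> real" where
  "E_dir al M g = (\<integral>x. dir_dens al M (simplex_ext M x) * g (simplex_ext M x)
                      \<partial>(PiM {..<M - 1} (\<lambda>_. lborel)))"

text \<open>E over q(v) q(r), v ~ Beta(a,b), r ~ Gamma(g,h), of ln Beta(v; 1, r) (stick-breaking prior term).\<close>
definition E_stick_prior :: "real \<Rightarrow> real \<Rightarrow> real \<Rightarrow> real \<Rightarrow> real" where
  "E_stick_prior a b g h = (\<integral>p. beta_pdf a b (fst p) * gamma_pdf g h (snd p)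
                                 * ln (beta_pdf 1 (snd p) (fst p)) \<partial>(lborel \<Otimes>\<^sub>M lborel))"

text \<open>Node histories z_{0:t} with nodes in {1..Z}, as lists of length t+1.\<close>
definition hists :: "nat \<Rightarrow> nat \<Rightarrow> nat list set" where
  "hists Z t = {zs. length zs = Suc t \<and> set zs \<subseteq> {1..Z}}"

text \<open>p(a_{0:t}, z_{0:t} | o_{1:t}, Theta); om a ob i j = omega_{a,ob}^{i,j}; pol i a = pi_i^a.\<close>
definition fsc_joint :: "(nat \<Rightarrow> real) \<Rightarrow> (nat \<Rightarrow> nat \<Rightarrow> nat \<Rightarrow> nat \<Rightarrow> real) \<Rightarrow> (nat \<Rightarrow> nat \<Rightarrow> real)
     \<Rightarrow> (nat \<Rightarrow> nat) \<Rightarrow> (nat \<Rightarrow> nat) \<Rightarrow> nat list \<Rightarrow> nat \<Rightarrow> real" where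
  "fsc_joint eta om pol acts obs zs t =
     eta (zs ! 0) * pol (zs ! 0) (acts 0) *
     (\<Prod>\<tau>\<in>{1..t}. om (acts (\<tau> - 1)) (obs \<tau>) (zs ! (\<tau> - 1)) (zs ! \<tau>) * pol (zs ! \<tau>) (acts \<tau>))"

definition fsc_marg :: "(nat \<Rightarrow> real) \<Rightarrow> (nat \<Rightarrow> nat \<Rightarrow> nat \<Rightarrow> nat \<Rightarrow> real) \<Rightarrow> (nat \<Rightarrow> nat \<Rightarrow> real)
     \<Rightarrow> nat \<Rightarrow> (nat \<Rightarrow> nat) \<Rightarrow> (nat \<Rightarrow> nat) \<Rightarrow> nat \<Rightarrow> real" where
  "fsc_marg eta om pol Z acts obs t = (\<Sum>zs\<in>hists Z t. fsc_joint eta om pol acts obs zs t)"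

definition fsc_cond :: "(nat \<Rightarrow> real) \<Rightarrow> (nat \<Rightarrow> nat \<Rightarrow> nat \<Rightarrow> nat \<Rightarrow> real) \<Rightarrow> (nat \<Rightarrow> nat \<Rightarrow> real)
     \<Rightarrow> nat \<Rightarrow> (nat \<Rightarrow> nat) \<Rightarrow> (nat \<Rightarrow> nat) \<Rightarrow> nat list \<Rightarrow> nat \<Rightarrow> real" where
  "fsc_cond eta om pol Z acts obs zs t = fsc_joint eta om pol acts obs zs t / fsc_marg eta om pol Z acts obs t"

text \<open>Agents n \<in> {1..N}, trajectories k \<in> {1..K}, nodes {1..nZ n}, actions {..<nA n},
  observations {..<nO n}. act k n tau = a_{n,tau}^k, obs k n tau = o_{n,tau}^k (tau \<ge> 1),
  rew k t = r_t^k, behav k n t = p(a_{n,0:t}^k | o_{n,1:t}^k, Pi),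
  c/d indexed (n a ob), theta indexed (n i a).\<close>
record model =
  nAg :: nat
  nA :: "nat \<Rightarrow> nat"
  nO :: "nat \<Rightarrow> nat"
  nZ :: "nat \<Rightarrow> nat"
  nK :: nat
  T :: "nat \<Rightarrow> nat"
  act :: "nat \<Rightarrow> nat \<Rightarrow> nat \<Rightarrow> nat"
  obs :: "nat \<Rightarrow> nat \<Rightarrow> nat \<Rightarrow> nat"
  rew :: "nat \<Rightarrow> nat \<Rightarrow> real"
  Rmin :: real
  gam :: real
  behav :: "nat \<Rightarrow> nat \<Rightarrow> nat \<Rightarrow> real"
  he :: real
  hf :: real
  hc :: "nat \<Rightarrow> nat \<Rightarrow> nat \<Rightarrow> real"
  hd :: "nat \<Rightarrow> nat \<Rightarrow> nat \<Rightarrow> real"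
  theta :: "nat \<Rightarrow> nat \<Rightarrow> nat \<Rightarrow> real"

definition wf_model :: "model \<Rightarrow> bool" where
  "wf_model M \<longleftrightarrow>
     nAg M \<ge> 1 \<and> nK M \<ge> 1 \<and> 0 \<le> gam M \<and> gam M < 1 \<and> 0 < he M \<and> 0 < hf M \<and>
     (\<forall>n\<in>{1..nAg M}. nZ M n \<ge> 1 \<and> nA M n \<ge> 1 \<and> nO M n \<ge> 1) \<and>
     (\<forall>n\<in>{1..nAg M}. \<forall>a<nA M n. \<forall>ob<nO M n. 0 < hc M n a ob \<and> 0 < hd M n a ob) \<and>
     (\<forall>n\<in>{1..nAg M}. \<forall>i\<in>{1..nZ M n}. \<forall>a<nA M n. 0 < theta M n i a) \<and>
     (\<forall>k\<in>{1..nK M}. \<forall>t\<le>T M k. Rmin M \<le> rew M k t \<and>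
        (\<forall>n\<in>{1..nAg M}. act M k n t < nA M n \<and> obs M k n t < nO M n \<and> 0 < behav M k n t))"

text \<open>Variational parameters: dlt/mu (n i), sgm/lam (n a ob i j), gg/hh (n), aa/bb (n a ob i),
  phi (n i a).\<close>
record vparams =
  dlt :: "nat \<Rightarrow> nat \<Rightarrow> real"
  mu :: "nat \<Rightarrow> nat \<Rightarrow> real"
  sgm :: "nat \<Rightarrow> nat \<Rightarrow> nat \<Rightarrow> nat \<Rightarrow> nat \<Rightarrow> real"
  lam :: "nat \<Rightarrow> nat \<Rightarrow> nat \<Rightarrow> nat \<Rightarrow> nat \<Rightarrow> real"
  gg :: "nat \<Rightarrow> real"
  hh :: "nat \<Rightarrow> real"
  aa :: "nat \<Rightarrow> nat \<Rightarrow> nat \<Rightarrow> nat \<Rightarrow> real"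
  bb :: "nat \<Rightarrow> nat \<Rightarrow> nat \<Rightarrow> nat \<Rightarrow> real"
  phi :: "nat \<Rightarrow> nat \<Rightarrow> nat \<Rightarrow> real"

definition vparams_ok :: "model \<Rightarrow> vparams \<Rightarrow> bool" where
  "vparams_ok M P \<longleftrightarrow>
     (\<forall>n\<in>{1..nAg M}. 0 < gg P n \<and> 0 < hh P n \<and>
       (\<forall>i\<in>{1..nZ M n}. 0 < dlt P n i \<and> 0 < mu P n i \<and> (\<forall>a<nA M n. 0 < phi P n i a)) \<and>
       (\<forall>a<nA M n. \<forall>ob<nO M n. \<forall>i\<in>{1..nZ M n}. 0 < aa P n a ob i \<and> 0 < bb P n a ob i \<and>
          (\<forall>j\<in>{1..nZ M n}. 0 < sgm P n a ob i j \<and> 0 < lam P n a ob i j)))"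

definition Elog_eta :: "vparams \<Rightarrow> nat \<Rightarrow> nat \<Rightarrow> real" where
  "Elog_eta P n i = E_beta (dlt P n i) (mu P n i) ln
      + (\<Sum>m\<in>{1..<i}. E_beta (dlt P n m) (mu P n m) (\<lambda>x. ln (1 - x)))"

definition Elog_omega :: "vparams \<Rightarrow> nat \<Rightarrow> nat \<Rightarrow> nat \<Rightarrow> nat \<Rightarrow> nat \<Rightarrow> real" where
  "Elog_omega P n a ob i j = E_beta (sgm P n a ob i j) (lam P n a ob i j) ln
      + (\<Sum>m\<in>{1..<j}. E_beta (sgm P n a ob i m) (lam P n a ob i m) (\<lambda>x. ln (1 - x)))"

definition Elog_pi :: "model \<Rightarrow> vparams \<Rightarrow> nat \<Rightarrow> nat \<Rightarrow> nat \<Rightarrow> real" where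
  "Elog_pi M P n i a = E_dir (phi P n i) (nA M n) (\<lambda>p. ln (p a))"

definition eta_t :: "vparams \<Rightarrow> nat \<Rightarrow> nat \<Rightarrow> real" where
  "eta_t P n i = exp (Elog_eta P n i)"

definition om_t :: "vparams \<Rightarrow> nat \<Rightarrow> nat \<Rightarrow> nat \<Rightarrow> nat \<Rightarrow> nat \<Rightarrow> real" where
  "om_t P n a ob i j = exp (Elog_omega P n a ob i j)"

definition pi_t :: "model \<Rightarrow> vparams \<Rightarrow> nat \<Rightarrow> nat \<Rightarrow> nat \<Rightarrow> real" where
  "pi_t M P n i a = exp (Elog_pi M P n i a)"

definition marg_t :: "model \<Rightarrow> vparams \<Rightarrow> nat \<Rightarrow> nat \<Rightarrow> nat \<Rightarrow> real" where
  "marg_t M P n k t = fsc_marg (eta_t P n) (om_t P n) (pi_t M P n) (nZ M n) (act M k n) (obs M k n) t"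

definition cond_t :: "model \<Rightarrow> vparams \<Rightarrow> nat \<Rightarrow> nat \<Rightarrow> nat \<Rightarrow> nat list \<Rightarrow> real" where
  "cond_t M P n k t zs = fsc_cond (eta_t P n) (om_t P n) (pi_t M P n) (nZ M n) (act M k n) (obs M k n) zs t"

definition rtil :: "model \<Rightarrow> nat \<Rightarrow> nat \<Rightarrow> real" where
  "rtil M k t = gam M ^ t * (rew M k t - Rmin M) / (\<Prod>n\<in>{1..nAg M}. behav M k n t)"

definition Vhat_t :: "model \<Rightarrow> vparams \<Rightarrow> real" where
  "Vhat_t M P = (1 / real (nK M)) * (\<Sum>k\<in>{1..nK M}. \<Sum>t\<le>T M k.
       rtil M k t * (\<Prod>n\<in>{1..nAg M}. marg_t M P n k t))"

definition nu_t :: "model \<Rightarrow> vparams \<Rightarrow> nat \<Rightarrow> nat \<Rightarrow> real" where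
  "nu_t M P k t = gam M ^ t * (rew M k t - Rmin M) * (\<Prod>n\<in>{1..nAg M}. marg_t M P n k t)
      / ((\<Prod>n\<in>{1..nAg M}. behav M k n t) * Vhat_t M P)"

definition vhists :: "model \<Rightarrow> nat \<Rightarrow> (nat \<Rightarrow> nat list) set" where
  "vhists M t = PiE {1..nAg M} (\<lambda>n. hists (nZ M n) t)"

definition qz :: "model \<Rightarrow> vparams \<Rightarrow> nat \<Rightarrow> nat \<Rightarrow> (nat \<Rightarrow> nat list) \<Rightarrow> real" where
  "qz M P k t zv = nu_t M P k t * (\<Prod>n\<in>{1..nAg M}. cond_t M P n k t (zv n))"

definition qm1 :: "model \<Rightarrow> vparams \<Rightarrow> nat \<Rightarrow> nat \<Rightarrow> nat \<Rightarrow> nat \<Rightarrow> nat \<Rightarrow> real" where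
  "qm1 M P n k t \<tau> i = nu_t M P k t *
      (\<Sum>zs\<in>{zs\<in>hists (nZ M n) t. zs ! \<tau> = i}. cond_t M P n k t zs)"

definition qm2 :: "model \<Rightarrow> vparams \<Rightarrow> nat \<Rightarrow> nat \<Rightarrow> nat \<Rightarrow> nat \<Rightarrow> nat \<Rightarrow> nat \<Rightarrow> real" where
  "qm2 M P n k t \<tau> i j = nu_t M P k t *
      (\<Sum>zs\<in>{zs\<in>hists (nZ M n) t. zs ! (\<tau> - 1) = i \<and> zs ! \<tau> = j}. cond_t M P n k t zs)"

definition Ejoint :: "model \<Rightarrow> vparams \<Rightarrow> nat \<Rightarrow> nat \<Rightarrow> nat \<Rightarrow> nat list \<Rightarrow> real" where
  "Ejoint M P n k t zs = Elog_eta P n (zs ! 0)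
      + (\<Sum>\<tau>\<le>t. Elog_pi M P n (zs ! \<tau>) (act M k n \<tau>))
      + (\<Sum>\<tau>\<in>{1..t}. Elog_omega P n (act M k n (\<tau> - 1)) (obs M k n \<tau>) (zs ! (\<tau> - 1)) (zs ! \<tau>))"

text \<open>ELBO of the variational distribution with parameters P, the factor q(z) being the one
  built from tilde Theta of the parameters P0 (held fixed).\<close>
definition ELBO :: "model \<Rightarrow> vparams \<Rightarrow> vparams \<Rightarrow> real" where
  "ELBO M P0 P =
     (1 / real (nK M)) * (\<Sum>k\<in>{1..nK M}. \<Sum>t\<le>T M k. \<Sum>zv\<in>vhists M t.
        qz M P0 k t zv * (ln (rtil M k t) + (\<Sum>n\<in>{1..nAg M}. Ejoint M P n k t (zv n))))
   + (\<Sum>n\<in>{1..nAg M}. \<Sum>i\<in>{1..nZ M n}. E_stick_prior (dlt P n i) (mu P n i) (gg P n) (hh P n))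
   + (\<Sum>n\<in>{1..nAg M}. \<Sum>a<nA M n. \<Sum>ob<nO M n. \<Sum>i\<in>{1..nZ M n}. \<Sum>j\<in>{1..nZ M n}.
        E_stick_prior (sgm P n a ob i j) (lam P n a ob i j) (aa P n a ob i) (bb P n a ob i))
   + (\<Sum>n\<in>{1..nAg M}. \<Sum>i\<in>{1..nZ M n}.
        E_dir (phi P n i) (nA M n) (\<lambda>p. ln (dir_dens (theta M n i) (nA M n) p)))
   + (\<Sum>n\<in>{1..nAg M}. E_gamma (gg P n) (hh P n) (\<lambda>r. ln (gamma_pdf (he M) (hf M) r)))
   + (\<Sum>n\<in>{1..nAg M}. \<Sum>a<nA M n. \<Sum>ob<nO M n. \<Sum>i\<in>{1..nZ M n}.
        E_gamma (aa P n a ob i) (bb P n a ob i) (\<lambda>x. ln (gamma_pdf (hc M n a ob) (hd M n a ob) x)))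
   - ( (\<Sum>n\<in>{1..nAg M}. \<Sum>i\<in>{1..nZ M n}.
          E_beta (dlt P n i) (mu P n i) (\<lambda>x. ln (beta_pdf (dlt P n i) (mu P n i) x)))
     + (\<Sum>n\<in>{1..nAg M}. \<Sum>a<nA M n. \<Sum>ob<nO M n. \<Sum>i\<in>{1..nZ M n}. \<Sum>j\<in>{1..nZ M n}.
          E_beta (sgm P n a ob i j) (lam P n a ob i j) (\<lambda>x. ln (beta_pdf (sgm P n a ob i j) (lam P n a ob i j) x)))
     + (\<Sum>n\<in>{1..nAg M}. E_gamma (gg P n) (hh P n) (\<lambda>x. ln (gamma_pdf (gg P n) (hh P n) x)))
     + (\<Sum>n\<in>{1..nAg M}. \<Sum>a<nA M n. \<Sum>ob<nO M n. \<Sum>i\<in>{1..nZ M n}.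
          E_gamma (aa P n a ob i) (bb P n a ob i) (\<lambda>x. ln (gamma_pdf (aa P n a ob i) (bb P n a ob i) x)))
     + (\<Sum>n\<in>{1..nAg M}. \<Sum>i\<in>{1..nZ M n}.
          E_dir (phi P n i) (nA M n) (\<lambda>p. ln (dir_dens (phi P n i) (nA M n) p)))
     + (1 / real (nK M)) * (\<Sum>k\<in>{1..nK M}. \<Sum>t\<le>T M k. \<Sum>zv\<in>vhists M t.
          qz M P0 k t zv * ln (qz M P0 k t zv)) )"

definition upd_dlt :: "model \<Rightarrow> vparams \<Rightarrow> nat \<Rightarrow> nat \<Rightarrow> real" where
  "upd_dlt M P0 n i = 1 + (\<Sum>k\<in>{1..nK M}. (1 / real (nK M)) * (\<Sum>t\<le>T M k. qm1 M P0 n k t 0 i))"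

definition upd_mu :: "model \<Rightarrow> vparams \<Rightarrow> vparams \<Rightarrow> nat \<Rightarrow> nat \<Rightarrow> real" where
  "upd_mu M P0 P n i = gg P n / hh P n +
     (\<Sum>k\<in>{1..nK M}. (1 / real (nK M)) * (\<Sum>t\<le>T M k. \<Sum>m\<in>{i+1..nZ M n}. qm1 M P0 n k t 0 m))"

definition upd_phi :: "model \<Rightarrow> vparams \<Rightarrow> nat \<Rightarrow> nat \<Rightarrow> nat \<Rightarrow> real" where
  "upd_phi M P0 n i = (\<lambda>a\<in>{..<nA M n}. theta M n i a +
     (\<Sum>k\<in>{1..nK M}. (1 / real (nK M)) * (\<Sum>t\<le>T M k. \<Sum>\<tau>\<le>t.
        qm1 M P0 n k t \<tau> i * (if act M k n \<tau> = a then 1 else 0))))"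

definition upd_sgm :: "model \<Rightarrow> vparams \<Rightarrow> nat \<Rightarrow> nat \<Rightarrow> nat \<Rightarrow> nat \<Rightarrow> nat \<Rightarrow> real" where
  "upd_sgm M P0 n a ob i j = 1 +
     (\<Sum>k\<in>{1..nK M}. (1 / real (nK M)) * (\<Sum>t\<le>T M k. \<Sum>\<tau>\<in>{1..t}.
        qm2 M P0 n k t \<tau> i j * (if act M k n (\<tau> - 1) = a \<and> obs M k n \<tau> = ob then 1 else 0)))"

definition upd_lam :: "model \<Rightarrow> vparams \<Rightarrow> vparams \<Rightarrow> nat \<Rightarrow> nat \<Rightarrow> nat \<Rightarrow> nat \<Rightarrow> nat \<Rightarrow> real" where
  "upd_lam M P0 P n a ob i j = aa P n a ob i / bb P n a ob i +
     (\<Sum>k\<in>{1..nK M}. (1 / real (nK M)) * (\<Sum>t\<le>T M k. \<Sum>\<tau>\<in>{1..t}. \<Sum>m\<in>{j+1..nZ M n}.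
        qm2 M P0 n k t \<tau> i m * (if act M k n (\<tau> - 1) = a \<and> obs M k n \<tau> = ob then 1 else 0)))"

definition upd_g :: "model \<Rightarrow> nat \<Rightarrow> real" where
  "upd_g M n = he M + real (nZ M n)"

definition upd_h :: "model \<Rightarrow> vparams \<Rightarrow> nat \<Rightarrow> real" where
  "upd_h M P n = hf M - (\<Sum>i\<in>{1..nZ M n}. Digamma (mu P n i) - Digamma (dlt P n i + mu P n i))"

definition upd_a :: "model \<Rightarrow> nat \<Rightarrow> nat \<Rightarrow> nat \<Rightarrow> real" where
  "upd_a M n a ob = hc M n a ob + real (nZ M n)"

definition upd_b :: "model \<Rightarrow> vparams \<Rightarrow> nat \<Rightarrow> nat \<Rightarrow> nat \<Rightarrow> nat \<Rightarrow> real" where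
  "upd_b M P n a ob i = hd M n a ob -
     (\<Sum>j\<in>{1..nZ M n}. Digamma (lam P n a ob i j) - Digamma (sgm P n a ob i j + lam P n a ob i j))"

definition is_argmax :: "('b \<Rightarrow> real) \<Rightarrow> 'b set \<Rightarrow> 'b \<Rightarrow> bool" where
  "is_argmax F S x \<longleftrightarrow> x \<in> S \<and> (\<forall>y\<in>S. F y \<le> F x)"

end

theory Submission
  imports Defs
begin

lemma beta_kernel_nn:
  fixes a b t :: real
  assumes a: "a > 0" and b: "b > 0" and t: "t > 0"
  shows "(\<integral>\<^sup>+y. ennreal (if 0 < y \<and> y < t then y powr (a-1) * (t-y) powr (b-1) else 0) \<partial>lborel)
         = ennreal (t powr (a+b-1) * Beta a b)"
proof -
  have h: "((\<lambda>u. u powr (a - 1) * (1 - u) powr (b - 1)) has_integral Beta a b) {0<..<1}"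
    using has_integral_Beta_real[OF a b] has_integral_open_interval[of _ _ 0 "1::real"]
    by auto
  have 1: "(\<integral>\<^sup>+u. ennreal (u powr (a - 1) * (1 - u) powr (b - 1)) * indicator {0<..<1} u \<partial>lborel) = ennreal (Beta a b)"
    by (rule nn_integral_has_integral_lebesgue'[OF _ h]) auto
  let ?f = "\<lambda>y::real. ennreal (if 0 < y \<and> y < t then y powr (a-1) * (t-y) powr (b-1) else 0)"
  have "(\<integral>\<^sup>+y. ?f y \<partial>lborel) = \<bar>t\<bar> * (\<integral>\<^sup>+u. ?f (0 + t * u) \<partial>lborel)"
    by (rule nn_integral_real_affine) (use t in auto)
  also have "(\<lambda>u. ?f (0 + t * u)) = (\<lambda>u. ennreal (t powr (a+b-2)) * (ennreal (u powr (a - 1) * (1 - u) powr (b - 1)) * indicator {0<..<1} u))"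
  proof
    fix u :: real
    show "?f (0 + t * u) = ennreal (t powr (a+b-2)) * (ennreal (u powr (a - 1) * (1 - u) powr (b - 1)) * indicator {0<..<1} u)"
    proof (cases "0 < u \<and> u < 1")
      case True
      have "t - t * u = t * (1 - u)" by (simp add: algebra_simps)
      moreover have "(t*u) powr (a-1) * (t*(1-u)) powr (b-1) = t powr (a+b-2) * (u powr (a - 1) * (1 - u) powr (b - 1))"
      proof -
        have "(t*u) powr (a-1) * (t*(1-u)) powr (b-1) = (t powr (a-1) * t powr (b-1)) * (u powr (a - 1) * (1 - u) powr (b - 1))"
          using True t by (simp add: powr_mult)
        also have "t powr (a-1) * t powr (b-1) = t powr (a+b-2)"
          by (simp add: powr_add[symmetric])
        finally show ?thesis .
      qed
      ultimately show ?thesis using True t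
        by (simp add: ennreal_mult'[symmetric] indicator_def mult_pos_pos)
    next
      case False
      then have "\<not> (0 < t*u \<and> t*u < t)" using t
        by (metis mult.commute mult_less_cancel_right2 zero_less_mult_pos2 less_eq_real_def mult_less_cancel_left_pos)
      then have "?f (0 + t * u) = 0" by (simp only: add_0_left if_False ennreal_0)
      moreover have "indicator {0<..<1} u = (0::ennreal)" using False by (simp add: indicator_def)
      ultimately show ?thesis by simp
    qed
  qed
  also have "\<bar>t\<bar> * (\<integral>\<^sup>+u. ennreal (t powr (a+b-2)) * (ennreal (u powr (a - 1) * (1 - u) powr (b - 1)) * indicator {0<..<1} u) \<partial>lborel)
     = ennreal t * (ennreal (t powr (a+b-2)) * ennreal (Beta a b))"
    using t by (subst nn_integral_cmult) (auto simp: 1)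
  also have "\<dots> = ennreal (t powr (a+b-1) * Beta a b)"
    using t by (simp add: ennreal_mult'[symmetric] powr_add[symmetric] mult.assoc[symmetric] powr_mult_base)
  finally show ?thesis .
qed

lemma gibbs:
  fixes p q :: "'a \<Rightarrow> real"
  assumes pm: "p \<in> borel_measurable N" and qm: "q \<in> borel_measurable N"
    and p0: "\<And>x. 0 \<le> p x" and q0: "\<And>x. 0 \<le> q x"
    and pi: "integral\<^sup>L N p = 1" and qi: "integral\<^sup>L N q = 1"
    and pq: "\<And>x. p x > 0 \<Longrightarrow> q x > 0"
    and i1: "integrable N (\<lambda>x. p x * ln (q x))" and i2: "integrable N (\<lambda>x. p x * ln (p x))"
  shows "integral\<^sup>L N (\<lambda>x. p x * ln (q x)) \<le> integral\<^sup>L N (\<lambda>x. p x * ln (p x))"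
proof -
  have ip: "integrable N p" using pi not_integrable_integral_eq by fastforce
  have iq: "integrable N q" using qi not_integrable_integral_eq by fastforce
  have pt: "p x * ln (q x) - p x * ln (p x) \<le> q x - p x" for x
  proof (cases "p x > 0")
    case True
    then have qx: "q x > 0" by (rule pq)
    have "p x * ln (q x) - p x * ln (p x) = p x * ln (q x / p x)"
      using True qx by (simp add: ln_div algebra_simps)
    also have "\<dots> \<le> p x * (q x / p x - 1)"
      using True qx by (intro mult_left_mono ln_le_minus_one) auto
    also have "\<dots> = q x - p x" using True by (simp add: field_simps)
    finally show ?thesis .
  next
    case False
    then have "p x = 0" using p0[of x] by simp
    then show ?thesis using q0[of x] by simp
  qed
  have "integral\<^sup>L N (\<lambda>x. p x * ln (q x) - p x * ln (p x)) \<le> integral\<^sup>L N (\<lambda>x. q x - p x)"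
    by (rule integral_mono) (use i1 i2 ip iq pt in auto)
  also have "\<dots> = 0" using ip iq pi qi by simp
  finally show ?thesis using i1 i2 by simp
qed

lemma Beta_pos: "a > 0 \<Longrightarrow> b > 0 \<Longrightarrow> Beta a b > (0::real)"
  by (simp add: Beta_def)

lemma beta_pdf_meas [measurable]: "beta_pdf a b \<in> borel_measurable borel"
  unfolding beta_pdf_def by measurable

lemma beta_pdf_nonneg: "a > 0 \<Longrightarrow> b > 0 \<Longrightarrow> beta_pdf a b x \<ge> 0"
  by (simp add: beta_pdf_def Beta_pos less_imp_le)

lemma beta_pdf_pos: "a > 0 \<Longrightarrow> b > 0 \<Longrightarrow> 0 < x \<Longrightarrow> x < 1 \<Longrightarrow> beta_pdf a b x > 0"
  by (simp add: beta_pdf_def Beta_pos)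

lemma beta_pdf_nn:
  assumes a: "a > 0" and b: "b > 0"
  shows "(\<integral>\<^sup>+x. ennreal (beta_pdf a b x) \<partial>lborel) = 1"
proof -
  have "(\<lambda>x. ennreal (beta_pdf a b x)) = (\<lambda>x. ennreal (if 0 < x \<and> x < 1 then x powr (a-1) * (1-x) powr (b-1) else 0) * ennreal (1 / Beta a b))"
    using a b by (auto simp: beta_pdf_def ennreal_mult'[symmetric] Beta_pos)
  then have "(\<integral>\<^sup>+x. ennreal (beta_pdf a b x) \<partial>lborel) = (\<integral>\<^sup>+x. ennreal (if 0 < x \<and> x < 1 then x powr (a-1) * (1-x) powr (b-1) else 0) \<partial>lborel) * ennreal (1 / Beta a b)"
    by (simp add: nn_integral_multc)
  also have "\<dots> = ennreal (Beta a b) * ennreal (1 / Beta a b)"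
    using beta_kernel_nn[OF a b, of 1] by simp
  also have "\<dots> = 1" using Beta_pos[OF a b] by (simp add: ennreal_mult'[symmetric])
  finally show ?thesis .
qed

lemma beta_pdf_int:
  assumes a: "a > 0" and b: "b > 0"
  shows "integrable lborel (beta_pdf a b)" "integral\<^sup>L lborel (beta_pdf a b) = 1"
proof -
  show "integrable lborel (beta_pdf a b)"
    by (rule integrableI_nn_integral_finite[where x=1]) (use beta_pdf_nn[OF a b] beta_pdf_nonneg[OF a b] in auto)
  show "integral\<^sup>L lborel (beta_pdf a b) = 1"
    by (subst integral_eq_nn_integral) (use beta_pdf_nn[OF a b] beta_pdf_nonneg[OF a b] in auto)
qed

lemma beta_shift_left:
  assumes a: "a > 0" and b: "b > 0" and e: "e < a" and v: "0 < v" "v < 1"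
  shows "beta_pdf a b v * v powr (-e) = (Beta (a-e) b / Beta a b) * beta_pdf (a-e) b v"
  using v a b e Beta_pos[OF a b] Beta_pos[of "a-e" b]
  by (simp add: beta_pdf_def powr_add[symmetric] field_simps)

lemma beta_shift_right:
  assumes a: "a > 0" and b: "b > 0" and e: "e < b" and v: "0 < v" "v < 1"
  shows "beta_pdf a b v * (1-v) powr (-e) = (Beta a (b-e) / Beta a b) * beta_pdf a (b-e) v"
  using v a b e Beta_pos[OF a b] Beta_pos[of a "b-e"]
  by (simp add: beta_pdf_def powr_add[symmetric] field_simps)

lemma ln_bound_small:
  fixes v e :: real
  assumes "0 < v" "v \<le> 1" "e > 0"
  shows "\<bar>ln v\<bar> \<le> v powr (-e) / e"
proof -
  have "ln (v powr (-e)) < v powr (-e)" using assms by (intro ln_less_self) simp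
  moreover have "ln (v powr (-e)) = - e * ln v" by (simp add: ln_powr)
  ultimately have "- e * ln v \<le> v powr (-e)" by linarith
  moreover have "ln v \<le> 0" using ln_le_minus_one[of v] assms by linarith
  ultimately show ?thesis using assms by (simp add: field_simps)
qed

lemma beta_int_ln:
  assumes a: "a > 0" and b: "b > 0"
  shows "integrable lborel (\<lambda>v. beta_pdf a b v * ln v)"
proof -
  define e where "e = a / 2"
  have e: "0 < e" "e < a" using a by (auto simp: e_def)
  have "integrable lborel (\<lambda>v. (Beta (a-e) b / Beta a b) / e * beta_pdf (a-e) b v)"
    using beta_pdf_int(1)[of "a-e" b] e b by auto
  then show ?thesis
  proof (rule Bochner_Integration.integrable_bound)
    show "(\<lambda>v. beta_pdf a b v * ln v) \<in> borel_measurable lborel" by measurable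
    show "AE x in lborel. norm (beta_pdf a b x * ln x) \<le> norm ((Beta (a-e) b / Beta a b) / e * beta_pdf (a-e) b x)"
    proof (intro AE_I2)
      fix v :: real
      show "norm (beta_pdf a b v * ln v) \<le> norm ((Beta (a-e) b / Beta a b) / e * beta_pdf (a-e) b v)"
      proof (cases "0 < v \<and> v < 1")
        case True
        have "norm (beta_pdf a b v * ln v) = beta_pdf a b v * \<bar>ln v\<bar>"
          using beta_pdf_nonneg[OF a b] by (simp add: abs_mult)
        also have "\<dots> \<le> beta_pdf a b v * (v powr (-e) / e)"
          using True e by (intro mult_left_mono ln_bound_small beta_pdf_nonneg a b) auto
        also have "\<dots> = (beta_pdf a b v * v powr (-e)) / e" by simp
        also have "\<dots> = (Beta (a-e) b / Beta a b) / e * beta_pdf (a-e) b v"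
          using beta_shift_left[OF a b e(2)] True by simp
        also have "\<dots> \<le> norm ((Beta (a-e) b / Beta a b) / e * beta_pdf (a-e) b v)" by (simp only: real_norm_def abs_ge_self)
        finally show ?thesis .
      next
        case False
        then have "beta_pdf a b v = 0" unfolding beta_pdf_def by auto
        then show ?thesis by simp
      qed
    qed
  qed
qed

lemma beta_int_ln1m:
  assumes a: "a > 0" and b: "b > 0"
  shows "integrable lborel (\<lambda>v. beta_pdf a b v * ln (1-v))"
proof -
  define e where "e = b / 2"
  have e: "0 < e" "e < b" using b by (auto simp: e_def)
  have "integrable lborel (\<lambda>v. (Beta a (b-e) / Beta a b) / e * beta_pdf a (b-e) v)"
    using beta_pdf_int(1)[of a "b-e"] e a by auto
  then show ?thesis
  proof (rule Bochner_Integration.integrable_bound)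
    show "(\<lambda>v. beta_pdf a b v * ln (1-v)) \<in> borel_measurable lborel" by measurable
    show "AE x in lborel. norm (beta_pdf a b x * ln (1-x)) \<le> norm ((Beta a (b-e) / Beta a b) / e * beta_pdf a (b-e) x)"
    proof (intro AE_I2)
      fix v :: real
      show "norm (beta_pdf a b v * ln (1-v)) \<le> norm ((Beta a (b-e) / Beta a b) / e * beta_pdf a (b-e) v)"
      proof (cases "0 < v \<and> v < 1")
        case True
        have "norm (beta_pdf a b v * ln (1-v)) = beta_pdf a b v * \<bar>ln (1-v)\<bar>"
          using beta_pdf_nonneg[OF a b] by (simp add: abs_mult)
        also have "\<dots> \<le> beta_pdf a b v * ((1-v) powr (-e) / e)"
          using True e by (intro mult_left_mono ln_bound_small beta_pdf_nonneg a b) auto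
        also have "\<dots> = (beta_pdf a b v * (1-v) powr (-e)) / e" by simp
        also have "\<dots> = (Beta a (b-e) / Beta a b) / e * beta_pdf a (b-e) v"
          using beta_shift_right[OF a b e(2)] True by simp
        also have "\<dots> \<le> norm ((Beta a (b-e) / Beta a b) / e * beta_pdf a (b-e) v)" by (simp only: real_norm_def abs_ge_self)
        finally show ?thesis .
      next
        case False
        then have "beta_pdf a b v = 0" unfolding beta_pdf_def by auto
        then show ?thesis by simp
      qed
    qed
  qed
qed

lemma pos_not_nonpos_Int: "(x::real) > 0 \<Longrightarrow> x \<notin> \<int>\<^sub>\<le>\<^sub>0"
  by (auto elim!: nonpos_Ints_cases)

lemma seq_at0: "filterlim (\<lambda>n. inverse (real (Suc n))) (at (0::real)) sequentially"
  using LIMSEQ_inverse_real_of_nat by (auto simp: filterlim_at)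

lemma powr_quot_lim:
  fixes c :: real assumes c: "c > 0"
  shows "(\<lambda>n. (c powr (inverse (real (Suc n))) - 1) / inverse (real (Suc n))) \<longlonglongrightarrow> ln c"
proof -
  have "DERIV (\<lambda>x. exp (x * ln c)) 0 :> exp (0 * ln c) * ln c"
    by (auto intro!: derivative_eq_intros)
  then have "((\<lambda>h. (exp ((0 + h) * ln c) - exp (0 * ln c)) / h) \<longlongrightarrow> ln c) (at 0)"
    unfolding DERIV_def by simp
  from filterlim_compose[OF this seq_at0]
  show ?thesis using c by (simp add: powr_def)
qed

lemma powr_quot_bound:
  fixes c h :: real assumes c: "0 < c" "c < 1" and h: "h > 0"
  shows "\<bar>(c powr h - 1) / h\<bar> \<le> \<bar>ln c\<bar>"
proof -
  have "c powr h = exp (h * ln c)" using c by (simp add: powr_def)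
  moreover have "exp (h * ln c) \<ge> 1 + h * ln c" by (rule exp_ge_add_one_self)
  moreover have "ln c < 0" using c by simp
  moreover have "exp (h * ln c) \<le> 1" using h \<open>ln c < 0\<close> by (simp add: mult_pos_neg less_imp_le)
  ultimately show ?thesis using h by (simp add: abs_if field_simps split: if_splits)
qed

lemma beta_pdf_powr_int:
  assumes a: "a > 0" and b: "b > 0" and h: "h > 0"
  shows "integrable lborel (\<lambda>v. beta_pdf a b v * (1 - v) powr h)"
        "integral\<^sup>L lborel (\<lambda>v. beta_pdf a b v * (1 - v) powr h) = Beta a (b+h) / Beta a b"
proof -
  have eq: "beta_pdf a b v * (1 - v) powr h = (Beta a (b+h) / Beta a b) * beta_pdf a (b+h) v" for v
  proof (cases "0 < v \<and> v < 1")
    case True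
    then show ?thesis using beta_shift_right[OF a b, of "-h" v] h b by simp
  next
    case False
    then have "beta_pdf a b v = 0" "beta_pdf a (b+h) v = 0" unfolding beta_pdf_def by auto
    then show ?thesis by simp
  qed
  show "integrable lborel (\<lambda>v. beta_pdf a b v * (1 - v) powr h)"
    unfolding eq using beta_pdf_int(1)[of a "b+h"] a b h by simp
  show "integral\<^sup>L lborel (\<lambda>v. beta_pdf a b v * (1 - v) powr h) = Beta a (b+h) / Beta a b"
    unfolding eq using beta_pdf_int(2)[of a "b+h"] a b h by simp
qed

lemma E_beta_ln1m:
  assumes a: "a > 0" and b: "b > 0"
  shows "E_beta a b (\<lambda>v. ln (1 - v)) = Digamma b - Digamma (a + b)"
proof -
  define hn where "hn = (\<lambda>n::nat. inverse (real (Suc n)))"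
  have hn: "hn n > 0" for n by (simp add: hn_def)
  define s where "s = (\<lambda>n v. beta_pdf a b v * (((1 - v) powr (hn n) - 1) / hn n))"
  have lim1: "(\<lambda>n. integral\<^sup>L lborel (s n)) \<longlonglongrightarrow> integral\<^sup>L lborel (\<lambda>v. beta_pdf a b v * ln (1 - v))"
  proof (rule integral_dominated_convergence[where w="\<lambda>v. \<bar>beta_pdf a b v * ln (1 - v)\<bar>"])
    show "(\<lambda>v. beta_pdf a b v * ln (1 - v)) \<in> borel_measurable lborel" by measurable
    show "\<And>i. s i \<in> borel_measurable lborel" unfolding s_def by measurable
    show "integrable lborel (\<lambda>v. \<bar>beta_pdf a b v * ln (1 - v)\<bar>)"
      using beta_int_ln1m[OF a b] by (rule integrable_abs)
    show "AE v in lborel. (\<lambda>i. s i v) \<longlonglongrightarrow> beta_pdf a b v * ln (1 - v)"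
    proof (intro AE_I2)
      fix v :: real
      show "(\<lambda>i. s i v) \<longlonglongrightarrow> beta_pdf a b v * ln (1 - v)"
      proof (cases "0 < v \<and> v < 1")
        case True
        then show ?thesis unfolding s_def hn_def
          by (intro tendsto_mult tendsto_const powr_quot_lim) auto
      next
        case False
        then have "beta_pdf a b v = 0" unfolding beta_pdf_def by auto
        then show ?thesis unfolding s_def by simp
      qed
    qed
    show "\<And>i. AE v in lborel. norm (s i v) \<le> \<bar>beta_pdf a b v * ln (1 - v)\<bar>"
    proof (intro AE_I2)
      fix i and v :: real
      show "norm (s i v) \<le> \<bar>beta_pdf a b v * ln (1 - v)\<bar>"
      proof (cases "0 < v \<and> v < 1")
        case True
        have "norm (s i v) = beta_pdf a b v * \<bar>((1 - v) powr (hn i) - 1) / hn i\<bar>"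
          unfolding s_def using beta_pdf_nonneg[OF a b] by (simp add: abs_mult)
        also have "\<dots> \<le> beta_pdf a b v * \<bar>ln (1 - v)\<bar>"
          using True hn[of i] by (intro mult_left_mono powr_quot_bound beta_pdf_nonneg a b) auto
        also have "\<dots> = \<bar>beta_pdf a b v * ln (1 - v)\<bar>"
          using beta_pdf_nonneg[OF a b] by (simp add: abs_mult)
        finally show ?thesis .
      next
        case False
        then have "beta_pdf a b v = 0" unfolding beta_pdf_def by auto
        then show ?thesis unfolding s_def by simp
      qed
    qed
  qed
  have val: "integral\<^sup>L lborel (s n) = ((Beta a (b + hn n) - Beta a b) / hn n) / Beta a b" for n
  proof -
    have "s n = (\<lambda>v. (beta_pdf a b v * (1 - v) powr (hn n) - beta_pdf a b v) / hn n)"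
      unfolding s_def by (auto simp: field_simps)
    then have "integral\<^sup>L lborel (s n) = (Beta a (b + hn n) / Beta a b - 1) / hn n"
      using beta_pdf_powr_int[OF a b hn[of n]] beta_pdf_int[OF a b] by simp
    also have "\<dots> = ((Beta a (b + hn n) - Beta a b) / hn n) / Beta a b"
      using Beta_pos[OF a b] by (simp add: field_simps)
    finally show ?thesis .
  qed
  have "((\<lambda>y. Beta a y) has_field_derivative (Beta a b * (Digamma b - Digamma (a + b)))) (at b)"
    by (rule has_field_derivative_Beta2) (use a b in \<open>auto intro!: pos_not_nonpos_Int\<close>)
  then have "((\<lambda>h. (Beta a (b + h) - Beta a b) / h) \<longlongrightarrow> Beta a b * (Digamma b - Digamma (a + b))) (at 0)"
    unfolding DERIV_def .
  from filterlim_compose[OF this seq_at0]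
  have "(\<lambda>n. (Beta a (b + hn n) - Beta a b) / hn n) \<longlonglongrightarrow> Beta a b * (Digamma b - Digamma (a + b))"
    unfolding hn_def .
  then have "(\<lambda>n. ((Beta a (b + hn n) - Beta a b) / hn n) / Beta a b) \<longlonglongrightarrow> Beta a b * (Digamma b - Digamma (a + b)) / Beta a b"
    by (intro tendsto_divide tendsto_const) (use Beta_pos[OF a b] in auto)
  then have "(\<lambda>n. integral\<^sup>L lborel (s n)) \<longlonglongrightarrow> Digamma b - Digamma (a + b)"
    using Beta_pos[OF a b] by (simp add: val)
  with lim1 have "integral\<^sup>L lborel (\<lambda>v. beta_pdf a b v * ln (1 - v)) = Digamma b - Digamma (a + b)"
    using LIMSEQ_unique by blast
  then show ?thesis unfolding E_beta_def .
qed

lemma ln_beta_pdf: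
  assumes A: "A > 0" and B: "B > 0" and v: "0 < v" "v < 1"
  shows "ln (beta_pdf A B v) = (A-1) * ln v + (B-1) * ln (1-v) - ln (Beta A B)"
  using v Beta_pos[OF A B] by (simp add: beta_pdf_def ln_div ln_mult)

lemma beta_ln_pdf_pt:
  assumes a: "a > 0" and b: "b > 0" and A: "A > 0" and B: "B > 0"
  shows "beta_pdf a b v * ln (beta_pdf A B v) =
     (A-1) * (beta_pdf a b v * ln v) + (B-1) * (beta_pdf a b v * ln (1-v)) - ln (Beta A B) * beta_pdf a b v"
proof (cases "0 < v \<and> v < 1")
  case True
  have e: "ln (beta_pdf A B v) = (A-1) * ln v + (B-1) * ln (1-v) - ln (Beta A B)"
    by (rule ln_beta_pdf[OF A B]) (use True in auto)
  show ?thesis by (subst e) (simp add: algebra_simps)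
next
  case False
  then have "beta_pdf a b v = 0" unfolding beta_pdf_def by auto
  then show ?thesis by simp
qed

lemma beta_ln_pdf:
  assumes a: "a > 0" and b: "b > 0" and A: "A > 0" and B: "B > 0"
  shows "integrable lborel (\<lambda>v. beta_pdf a b v * ln (beta_pdf A B v))"
    "E_beta a b (\<lambda>v. ln (beta_pdf A B v)) =
       (A-1) * E_beta a b ln + (B-1) * E_beta a b (\<lambda>v. ln (1-v)) - ln (Beta A B)"
  using beta_int_ln[OF a b] beta_int_ln1m[OF a b] beta_pdf_int[OF a b]
  by (simp_all add: beta_ln_pdf_pt[OF a b A B] E_beta_def)

lemma beta_gibbs:
  assumes a: "a > 0" and b: "b > 0" and A: "A > 0" and B: "B > 0"
  shows "E_beta a b (\<lambda>v. ln (beta_pdf A B v)) \<le> E_beta a b (\<lambda>v. ln (beta_pdf a b v))"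
  unfolding E_beta_def
proof (rule gibbs)
  fix x assume "0 < beta_pdf a b x"
  then have "0 < x \<and> x < 1" by (auto simp: beta_pdf_def split: if_splits)
  then show "0 < beta_pdf A B x" by (intro beta_pdf_pos A B) auto
next
qed (use a b A B beta_pdf_nonneg beta_pdf_int beta_ln_pdf in auto)

lemma gamma_pdf_meas [measurable]: "gamma_pdf a b \<in> borel_measurable borel"
  unfolding gamma_pdf_def by measurable

lemma gamma_pdf_nonneg: "a > 0 \<Longrightarrow> b > 0 \<Longrightarrow> gamma_pdf a b x \<ge> 0"
  by (simp add: gamma_pdf_def)

lemma gamma_pdf_pos: "a > 0 \<Longrightarrow> b > 0 \<Longrightarrow> x > 0 \<Longrightarrow> gamma_pdf a b x > 0"
  by (simp add: gamma_pdf_def)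

lemma Gamma_real_nz: "x > 0 \<Longrightarrow> Gamma x \<noteq> (0::real)"
  using Gamma_real_pos[of x] by linarith

lemma gamma_kernel_nn:
  assumes a: "a > 0" and b: "b > 0"
  shows "(\<integral>\<^sup>+r. ennreal (if 0 < r then r powr (a-1) * exp (- b * r) else 0) \<partial>lborel) = ennreal (Gamma a / b powr a)"
proof -
  have 1: "(\<integral>\<^sup>+t. ennreal (t powr (a-1) / exp t) * indicator {0..} t \<partial>lborel) = ennreal (Gamma a)"
    by (rule nn_integral_has_integral_lebesgue'[OF _ Gamma_integral_real[OF a]]) auto
  let ?f = "\<lambda>t::real. ennreal (t powr (a-1) / exp t) * indicator {0..} t"
  have "(\<integral>\<^sup>+t. ?f t \<partial>lborel) = \<bar>b\<bar> * (\<integral>\<^sup>+r. ?f (0 + b * r) \<partial>lborel)"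
    by (rule nn_integral_real_affine) (use b in auto)
  also have "(\<lambda>r. ?f (0 + b * r)) = (\<lambda>r. ennreal (b powr (a-1)) * ennreal (if 0 < r then r powr (a-1) * exp (- b * r) else 0))"
  proof
    fix r :: real
    show "?f (0 + b * r) = ennreal (b powr (a-1)) * ennreal (if 0 < r then r powr (a-1) * exp (- b * r) else 0)"
    proof (cases "0 < r")
      case True
      have "(b * r) powr (a-1) / exp (b * r) = b powr (a-1) * (r powr (a-1) * exp (- b * r))"
        using True b by (simp add: powr_mult exp_minus field_simps)
      then show ?thesis using True b by (simp add: ennreal_mult'[symmetric] indicator_def)
    next
      case False
      show ?thesis
      proof (cases "r = 0")
        case True
        then show ?thesis by (simp add: indicator_def)
      next
        case False
        then have "b * r < 0" using \<open>\<not> 0 < r\<close> b by (simp add: mult_pos_neg)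
        then show ?thesis using \<open>\<not> 0 < r\<close> by (simp add: indicator_def)
      qed
    qed
  qed
  also have "\<bar>b\<bar> * (\<integral>\<^sup>+r. ennreal (b powr (a-1)) * ennreal (if 0 < r then r powr (a-1) * exp (- b * r) else 0) \<partial>lborel)
      = ennreal b * ennreal (b powr (a-1)) * (\<integral>\<^sup>+r. ennreal (if 0 < r then r powr (a-1) * exp (- b * r) else 0) \<partial>lborel)"
    using b by (subst nn_integral_cmult) (auto simp: mult.assoc)
  also have "ennreal b * ennreal (b powr (a-1)) = ennreal (b powr a)"
    using b by (simp add: ennreal_mult'[symmetric] powr_mult_base)
  finally have "ennreal (b powr a) * (\<integral>\<^sup>+r. ennreal (if 0 < r then r powr (a-1) * exp (- b * r) else 0) \<partial>lborel) = ennreal (Gamma a)"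
    using 1 by simp
  then have "ennreal (1 / b powr a) * (ennreal (b powr a) * (\<integral>\<^sup>+r. ennreal (if 0 < r then r powr (a-1) * exp (- b * r) else 0) \<partial>lborel)) = ennreal (1 / b powr a) * ennreal (Gamma a)"
    by simp
  then show ?thesis using b a
    by (simp add: mult.assoc[symmetric] ennreal_mult'[symmetric] less_imp_le)
qed

lemma gamma_pdf_nn:
  assumes a: "a > 0" and b: "b > 0"
  shows "(\<integral>\<^sup>+x. ennreal (gamma_pdf a b x) \<partial>lborel) = 1"
proof -
  have "(\<lambda>x. ennreal (gamma_pdf a b x)) = (\<lambda>x. ennreal (if 0 < x then x powr (a-1) * exp (- b * x) else 0) * ennreal (b powr a / Gamma a))"
    using a b by (auto simp: gamma_pdf_def ennreal_mult'[symmetric])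
  then have "(\<integral>\<^sup>+x. ennreal (gamma_pdf a b x) \<partial>lborel) = (\<integral>\<^sup>+x. ennreal (if 0 < x then x powr (a-1) * exp (- b * x) else 0) \<partial>lborel) * ennreal (b powr a / Gamma a)"
    by (simp add: nn_integral_multc)
  also have "\<dots> = ennreal (Gamma a / b powr a) * ennreal (b powr a / Gamma a)"
    using gamma_kernel_nn[OF a b] by simp
  also have "\<dots> = 1" using a b Gamma_real_nz[OF a] by (simp add: ennreal_mult'[symmetric])
  finally show ?thesis .
qed

lemma gamma_pdf_int:
  assumes a: "a > 0" and b: "b > 0"
  shows "integrable lborel (gamma_pdf a b)" "integral\<^sup>L lborel (gamma_pdf a b) = 1"
proof -
  show "integrable lborel (gamma_pdf a b)"
    by (rule integrableI_nn_integral_finite[where x=1]) (use gamma_pdf_nn[OF a b] gamma_pdf_nonneg[OF a b] in auto)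
  show "integral\<^sup>L lborel (gamma_pdf a b) = 1"
    by (subst integral_eq_nn_integral) (use gamma_pdf_nn[OF a b] gamma_pdf_nonneg[OF a b] in auto)
qed

lemma gamma_shift:
  assumes a: "a > 0" and b: "b > 0" and e: "a + e > 0" and r: "r > 0"
  shows "gamma_pdf a b r * r powr e = (Gamma (a+e) / (Gamma a * b powr e)) * gamma_pdf (a+e) b r"
proof -
  have 1: "b powr (a+e) = b powr a * b powr e" by (simp add: powr_add)
  have "a+e-1 = e + (a-1)" by simp
  then have 2: "r powr (a+e-1) = r powr e * r powr (a-1)" by (simp only: powr_add)
  show ?thesis using a b e r Gamma_real_pos[OF a] Gamma_real_pos[OF e] pos_not_nonpos_Int[OF a] pos_not_nonpos_Int[OF e]
    by (simp add: gamma_pdf_def 1 2 field_simps) (use Gamma_real_nz[OF e] in blast)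
qed

lemma gamma_shift_int:
  assumes a: "a > 0" and b: "b > 0" and e: "a + e > 0"
  shows "integrable lborel (\<lambda>r. gamma_pdf a b r * r powr e)"
    "integral\<^sup>L lborel (\<lambda>r. gamma_pdf a b r * r powr e) = Gamma (a+e) / (Gamma a * b powr e)"
proof -
  have eq: "gamma_pdf a b r * r powr e = (Gamma (a+e) / (Gamma a * b powr e)) * gamma_pdf (a+e) b r" for r
  proof (cases "r > 0")
    case True then show ?thesis by (rule gamma_shift[OF a b e])
  next
    case False then show ?thesis by (simp add: gamma_pdf_def)
  qed
  show "integrable lborel (\<lambda>r. gamma_pdf a b r * r powr e)"
    unfolding eq using gamma_pdf_int(1)[OF e b] by simp
  show "integral\<^sup>L lborel (\<lambda>r. gamma_pdf a b r * r powr e) = Gamma (a+e) / (Gamma a * b powr e)"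
    unfolding eq using gamma_pdf_int(2)[OF e b] by simp
qed

lemma gamma_id:
  assumes a: "a > 0" and b: "b > 0"
  shows "integrable lborel (\<lambda>r. gamma_pdf a b r * r)" "E_gamma a b (\<lambda>r. r) = a / b"
proof -
  have eq: "(\<lambda>r. gamma_pdf a b r * r) = (\<lambda>r. gamma_pdf a b r * r powr 1)"
  proof
    fix r show "gamma_pdf a b r * r = gamma_pdf a b r * r powr 1"
      by (cases "r > 0") (auto simp: gamma_pdf_def)
  qed
  have a1: "a + 1 > 0" using a by simp
  show "integrable lborel (\<lambda>r. gamma_pdf a b r * r)"
    unfolding eq by (rule gamma_shift_int(1)[OF a b a1])
  have g: "Gamma (a+1) = a * Gamma a" using Gamma_plus1[OF pos_not_nonpos_Int[OF a]] .
  have "E_gamma a b (\<lambda>r. r) = Gamma (a+1) / (Gamma a * b powr 1)"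
    unfolding E_gamma_def eq by (rule gamma_shift_int(2)[OF a b a1])
  also have "\<dots> = a / b" using g Gamma_real_pos[OF a] b by simp
  finally show "E_gamma a b (\<lambda>r. r) = a / b" .
qed

lemma ln_bound_pos:
  fixes r e :: real assumes r: "r > 0" and e: "e > 0"
  shows "\<bar>ln r\<bar> \<le> (r powr e + r powr (-e)) / e"
proof (cases "r \<le> 1")
  case True
  then have "\<bar>ln r\<bar> \<le> r powr (-e) / e" by (intro ln_bound_small) (use r e in auto)
  moreover have "r powr e / e \<ge> 0" using e by simp
  ultimately show ?thesis by (simp add: add_divide_distrib)
next
  case False
  have "ln (r powr e) < r powr e" using r by (intro ln_less_self) simp
  then have "e * ln r < r powr e" by (simp add: ln_powr)
  moreover have "ln r \<ge> 0" using False by simp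
  moreover have "r powr (-e) \<ge> 0" by simp
  moreover have "\<bar>ln r\<bar> = ln r" using \<open>ln r \<ge> 0\<close> by simp
  ultimately have "e * \<bar>ln r\<bar> \<le> r powr e + r powr (-e)" by linarith
  then show ?thesis using e by (simp add: field_simps)
qed

lemma gamma_int_ln:
  assumes a: "a > 0" and b: "b > 0"
  shows "integrable lborel (\<lambda>r. gamma_pdf a b r * ln r)"
proof -
  define e where "e = a / 2"
  have e: "0 < e" "a + e > 0" "a + - e > 0" using a by (auto simp: e_def)
  have "integrable lborel (\<lambda>r. (gamma_pdf a b r * r powr e + gamma_pdf a b r * r powr (-e)) / e)"
    using gamma_shift_int(1)[OF a b e(2)] gamma_shift_int(1)[OF a b e(3)] by simp
  then show ?thesis
  proof (rule Bochner_Integration.integrable_bound)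
    show "(\<lambda>r. gamma_pdf a b r * ln r) \<in> borel_measurable lborel" by measurable
    show "AE x in lborel. norm (gamma_pdf a b x * ln x) \<le> norm ((gamma_pdf a b x * x powr e + gamma_pdf a b x * x powr (-e)) / e)"
    proof (intro AE_I2)
      fix r :: real
      show "norm (gamma_pdf a b r * ln r) \<le> norm ((gamma_pdf a b r * r powr e + gamma_pdf a b r * r powr (-e)) / e)"
      proof (cases "r > 0")
        case True
        have "norm (gamma_pdf a b r * ln r) = gamma_pdf a b r * \<bar>ln r\<bar>"
          using gamma_pdf_nonneg[OF a b] by (simp add: abs_mult)
        also have "\<dots> \<le> gamma_pdf a b r * ((r powr e + r powr (-e)) / e)"
          by (intro mult_left_mono ln_bound_pos gamma_pdf_nonneg a b True e)
        also have "\<dots> = (gamma_pdf a b r * r powr e + gamma_pdf a b r * r powr (-e)) / e"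
          by (simp add: algebra_simps add_divide_distrib)
        also have "\<dots> \<le> norm ((gamma_pdf a b r * r powr e + gamma_pdf a b r * r powr (-e)) / e)"
          by (simp only: real_norm_def abs_ge_self)
        finally show ?thesis .
      next
        case False
        then show ?thesis by (simp add: gamma_pdf_def)
      qed
    qed
  qed
qed

lemma ln_gamma_pdf:
  assumes A: "A > 0" and B: "B > 0" and r: "r > 0"
  shows "ln (gamma_pdf A B r) = A * ln B - ln (Gamma A) + (A-1) * ln r - B * r"
  using A B r Gamma_real_nz[OF A] Gamma_real_pos[OF A] pos_not_nonpos_Int[OF A] by (simp add: gamma_pdf_def ln_div ln_mult) (use Gamma_real_nz[OF A] in blast)

lemma gamma_ln_pdf_pt:
  assumes a: "a > 0" and b: "b > 0" and A: "A > 0" and B: "B > 0"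
  shows "gamma_pdf a b r * ln (gamma_pdf A B r) =
     (A * ln B - ln (Gamma A)) * gamma_pdf a b r + (A-1) * (gamma_pdf a b r * ln r) - B * (gamma_pdf a b r * r)"
proof (cases "r > 0")
  case True
  show ?thesis by (subst ln_gamma_pdf[OF A B True]) (simp add: algebra_simps)
next
  case False
  then show ?thesis by (simp add: gamma_pdf_def)
qed

lemma gamma_ln_pdf:
  assumes a: "a > 0" and b: "b > 0" and A: "A > 0" and B: "B > 0"
  shows "integrable lborel (\<lambda>r. gamma_pdf a b r * ln (gamma_pdf A B r))"
    "E_gamma a b (\<lambda>r. ln (gamma_pdf A B r)) =
       A * ln B - ln (Gamma A) + (A-1) * E_gamma a b ln - B * E_gamma a b (\<lambda>r. r)"
  using gamma_int_ln[OF a b] gamma_id[OF a b] gamma_pdf_int[OF a b]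
  by (simp_all add: gamma_ln_pdf_pt[OF a b A B] E_gamma_def)

lemma gamma_gibbs:
  assumes a: "a > 0" and b: "b > 0" and A: "A > 0" and B: "B > 0"
  shows "E_gamma a b (\<lambda>r. ln (gamma_pdf A B r)) \<le> E_gamma a b (\<lambda>r. ln (gamma_pdf a b r))"
  unfolding E_gamma_def
proof (rule gibbs)
  fix x assume "0 < gamma_pdf a b x"
  then have "0 < x" by (auto simp: gamma_pdf_def split: if_splits)
  then show "0 < gamma_pdf A B x" by (intro gamma_pdf_pos A B) auto
next
qed (use a b A B gamma_pdf_nonneg gamma_pdf_int gamma_ln_pdf in auto)

lemma prod_int:
  fixes f g :: "real \<Rightarrow> real"
  assumes f: "integrable lborel f" and g: "integrable lborel g"
  shows "integrable (lborel \<Otimes>\<^sub>M lborel) (\<lambda>p. f (fst p) * g (snd p))"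
    "integral\<^sup>L (lborel \<Otimes>\<^sub>M lborel) (\<lambda>p. f (fst p) * g (snd p)) = integral\<^sup>L lborel f * integral\<^sup>L lborel g"
proof -
  have fm[measurable]: "f \<in> borel_measurable borel" using borel_measurable_integrable[OF f] by simp
  have gm[measurable]: "g \<in> borel_measurable borel" using borel_measurable_integrable[OF g] by simp
  have ff: "(\<integral>\<^sup>+x. ennreal (norm (f x)) \<partial>lborel) < \<infinity>" using f by (simp add: integrable_iff_bounded)
  have gf: "(\<integral>\<^sup>+x. ennreal (norm (g x)) \<partial>lborel) < \<infinity>" using g by (simp add: integrable_iff_bounded)
  have "(\<integral>\<^sup>+p. ennreal (norm (f (fst p) * g (snd p))) \<partial>(lborel \<Otimes>\<^sub>M lborel))
      = (\<integral>\<^sup>+x. \<integral>\<^sup>+y. ennreal (norm (f x * g y)) \<partial>lborel \<partial>lborel)"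
    by (subst lborel.nn_integral_fst[symmetric]) auto
  also have "\<dots> = (\<integral>\<^sup>+x. ennreal (norm (f x)) * (\<integral>\<^sup>+y. ennreal (norm (g y)) \<partial>lborel) \<partial>lborel)"
    by (simp add: abs_mult ennreal_mult nn_integral_cmult)
  also have "\<dots> = (\<integral>\<^sup>+x. ennreal (norm (f x)) \<partial>lborel) * (\<integral>\<^sup>+y. ennreal (norm (g y)) \<partial>lborel)"
    by (simp add: nn_integral_multc)
  also have "\<dots> < \<infinity>" using ff gf by (simp add: ennreal_mult_less_top)
  finally show i: "integrable (lborel \<Otimes>\<^sub>M lborel) (\<lambda>p. f (fst p) * g (snd p))"
    by (subst integrable_iff_bounded) auto
  have "integral\<^sup>L (lborel \<Otimes>\<^sub>M lborel) (\<lambda>p. f (fst p) * g (snd p)) = (\<integral>x. (\<integral>y. f x * g y \<partial>lborel) \<partial>lborel)"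
    using lborel_pair.integral_fst'[OF i] by simp
  also have "\<dots> = (\<integral>x. f x * integral\<^sup>L lborel g \<partial>lborel)" by simp
  also have "\<dots> = integral\<^sup>L lborel f * integral\<^sup>L lborel g" by simp
  finally show "integral\<^sup>L (lborel \<Otimes>\<^sub>M lborel) (\<lambda>p. f (fst p) * g (snd p)) = integral\<^sup>L lborel f * integral\<^sup>L lborel g" .
qed

lemma Beta_1_left: "r > 0 \<Longrightarrow> Beta 1 r = 1 / (r::real)"
  using Gamma_plus1[OF pos_not_nonpos_Int[of r]] Gamma_real_nz[of r]
  by (simp add: Beta_def add.commute)

lemma stick_pt:
  assumes a: "a > 0" and b: "b > 0" and g: "g > 0" and h: "h > 0"
  shows "beta_pdf a b v * gamma_pdf g h r * ln (beta_pdf 1 r v) =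
     beta_pdf a b v * (gamma_pdf g h r * ln r) + (beta_pdf a b v * ln (1 - v)) * (gamma_pdf g h r * r - gamma_pdf g h r)"
proof (cases "0 < v \<and> v < 1 \<and> r > 0")
  case True
  then have "ln (beta_pdf 1 r v) = (1-1) * ln v + (r-1) * ln (1-v) - ln (Beta 1 r)"
    by (intro ln_beta_pdf) auto
  also have "ln (Beta 1 r) = - ln r" using True by (simp add: Beta_1_left ln_div)
  finally have e: "ln (beta_pdf 1 r v) = (r-1) * ln (1-v) + ln r" by simp
  show ?thesis by (subst e) (simp add: algebra_simps)
next
  case False
  then have "beta_pdf a b v = 0 \<or> gamma_pdf g h r = 0" unfolding beta_pdf_def gamma_pdf_def by auto
  then show ?thesis by auto
qed

lemma E_stick:
  assumes a: "a > 0" and b: "b > 0" and g: "g > 0" and h: "h > 0"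
  shows "E_stick_prior a b g h = E_gamma g h ln + (g / h - 1) * E_beta a b (\<lambda>v. ln (1 - v))"
proof -
  have eq: "(\<lambda>p. beta_pdf a b (fst p) * gamma_pdf g h (snd p) * ln (beta_pdf 1 (snd p) (fst p))) =
    (\<lambda>p. (\<lambda>v. beta_pdf a b v) (fst p) * (\<lambda>r. gamma_pdf g h r * ln r) (snd p)
       + (\<lambda>v. beta_pdf a b v * ln (1 - v)) (fst p) * (\<lambda>r. gamma_pdf g h r * r - gamma_pdf g h r) (snd p))"
    by (rule ext) (simp only: stick_pt[OF a b g h])
  have i1: "integrable lborel (\<lambda>v. beta_pdf a b v)" using beta_pdf_int[OF a b] by simp
  have i2: "integrable lborel (\<lambda>r. gamma_pdf g h r * ln r)" using gamma_int_ln[OF g h] .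
  have i3: "integrable lborel (\<lambda>v. beta_pdf a b v * ln (1 - v))" using beta_int_ln1m[OF a b] .
  have i4: "integrable lborel (\<lambda>r. gamma_pdf g h r * r - gamma_pdf g h r)"
    using gamma_id(1)[OF g h] gamma_pdf_int(1)[OF g h] by simp
  have v4: "integral\<^sup>L lborel (\<lambda>r. gamma_pdf g h r * r - gamma_pdf g h r) = g / h - 1"
    using gamma_id[OF g h] gamma_pdf_int[OF g h] by (simp add: E_gamma_def)
  show ?thesis
    unfolding E_stick_prior_def eq
    using prod_int[OF i1 i2] prod_int[OF i3 i4] beta_pdf_int[OF a b] v4
    by (simp add: E_gamma_def E_beta_def)
qed

interpretation lbp: product_sigma_finite "\<lambda>_::nat. lborel :: real measure"
  by standard

definition Kd :: "nat \<Rightarrow> (nat \<Rightarrow> real) \<Rightarrow> real \<Rightarrow> real \<Rightarrow> (nat \<Rightarrow> real) \<Rightarrow> real" where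
  "Kd m al be s x = (if (\<forall>a<m. 0 < x a) \<and> 0 < s - (\<Sum>a<m. x a)
     then (\<Prod>a<m. x a powr (al a - 1)) * (s - (\<Sum>a<m. x a)) powr (be - 1) else 0)"

lemma Kd_meas [measurable]: "Kd m al be s \<in> borel_measurable (PiM {..<m} (\<lambda>_. lborel))"
  unfolding Kd_def by measurable

lemma Kd_nonneg: "Kd m al be s x \<ge> 0"
  by (auto simp: Kd_def intro!: mult_nonneg_nonneg prod_nonneg)

lemma Kd_Suc_upd:
  fixes x :: "nat \<Rightarrow> real"
  shows "Kd (Suc m) al be s (x(m := y)) =
    (if \<forall>a<m. 0 < x a then \<Prod>a<m. x a powr (al a - 1) else 0) *
    (if 0 < y \<and> y < s - (\<Sum>a<m. x a) then y powr (al m - 1) * ((s - (\<Sum>a<m. x a)) - y) powr (be - 1) else 0)"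
proof -
  have s: "(\<Sum>a<m. (x(m := y)) a) = (\<Sum>a<m. x a)" by (rule sum.cong) auto
  have p: "(\<Prod>a<m. (x(m := y)) a powr (al a - 1)) = (\<Prod>a<m. x a powr (al a - 1))" by (rule prod.cong) auto
  have q: "(\<forall>a<Suc m. 0 < (x(m := y)) a) \<longleftrightarrow> (\<forall>a<m. 0 < x a) \<and> 0 < y"
    by (auto simp: less_Suc_eq)
  show ?thesis unfolding Kd_def q by (auto simp: s p algebra_simps)
qed

lemma Kd_int:
  assumes "\<forall>a<m. al a > 0" and "be > 0" and "s > 0"
  shows "(\<integral>\<^sup>+x. ennreal (Kd m al be s x) \<partial>(PiM {..<m} (\<lambda>_. lborel))) =
    ennreal (s powr ((\<Sum>a<m. al a) + be - 1) * (\<Prod>a<m. Gamma (al a)) * Gamma be / Gamma ((\<Sum>a<m. al a) + be))"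
  using assms
proof (induction m arbitrary: be)
  case 0
  have "(\<integral>\<^sup>+x. ennreal (Kd 0 al be s x) \<partial>(PiM {..<0} (\<lambda>_. lborel))) = ennreal (Kd 0 al be s (\<lambda>_. undefined))"
    by (simp add: lbp.nn_integral_empty)
  also have "\<dots> = ennreal (s powr (be - 1))" using 0 by (simp add: Kd_def)
  finally show ?case using 0 Gamma_real_nz[of be] by simp
next
  case (Suc m)
  have alm: "al m > 0" using Suc.prems by auto
  have al': "\<forall>a<m. al a > 0" using Suc.prems by auto
  have be': "al m + be > 0" using alm Suc.prems(2) by linarith
  have inner: "(\<integral>\<^sup>+y. ennreal (Kd (Suc m) al be s (x(m := y))) \<partial>lborel) =
      ennreal (Kd m al (al m + be) s x) * ennreal (Beta (al m) be)" for x :: "nat \<Rightarrow> real"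
  proof -
    define t where "t = s - (\<Sum>a<m. x a)"
    define C where "C = (if \<forall>a<m. 0 < x a then \<Prod>a<m. x a powr (al a - 1) else 0)"
    have C0: "C \<ge> 0" by (auto simp: C_def intro!: prod_nonneg)
    have "(\<integral>\<^sup>+y. ennreal (Kd (Suc m) al be s (x(m := y))) \<partial>lborel) =
        (\<integral>\<^sup>+y. ennreal C * ennreal (if 0 < y \<and> y < t then y powr (al m - 1) * (t - y) powr (be - 1) else 0) \<partial>lborel)"
      unfolding Kd_Suc_upd C_def[symmetric] t_def[symmetric] using C0
      by (intro nn_integral_cong) (simp add: ennreal_mult')
    also have "\<dots> = ennreal C * (\<integral>\<^sup>+y. ennreal (if 0 < y \<and> y < t then y powr (al m - 1) * (t - y) powr (be - 1) else 0) \<partial>lborel)"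
      by (rule nn_integral_cmult) measurable
    also have "\<dots> = ennreal (Kd m al (al m + be) s x) * ennreal (Beta (al m) be)"
    proof (cases "t > 0")
      case True
      have "ennreal C * (\<integral>\<^sup>+y. ennreal (if 0 < y \<and> y < t then y powr (al m - 1) * (t - y) powr (be - 1) else 0) \<partial>lborel)
         = ennreal C * ennreal (t powr (al m + be - 1) * Beta (al m) be)"
        by (subst beta_kernel_nn[OF alm Suc.prems(2) True]) simp
      also have "\<dots> = ennreal (Kd m al (al m + be) s x) * ennreal (Beta (al m) be)"
      proof (cases "\<forall>a<m. 0 < x a")
        case True2: True
        have P0: "(\<Prod>a<m. x a powr (al a - 1)) \<ge> 0" by (intro prod_nonneg) auto
        have "Kd m al (al m + be) s x = (\<Prod>a<m. x a powr (al a - 1)) * t powr (al m + be - 1)"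
          using True True2 by (simp add: Kd_def t_def)
        moreover have "C = (\<Prod>a<m. x a powr (al a - 1))" using True2 by (simp add: C_def)
        ultimately show ?thesis using P0 Beta_pos[OF alm Suc.prems(2)]
          by (simp add: ennreal_mult'[symmetric] mult.assoc)
      next
        case False2: False
        then have "Kd m al (al m + be) s x = 0" "C = 0" by (auto simp: Kd_def C_def)
        then show ?thesis by simp
      qed
      finally show ?thesis .
    next
      case False
      then have "(\<lambda>y. ennreal (if 0 < y \<and> y < t then y powr (al m - 1) * (t - y) powr (be - 1) else 0)) = (\<lambda>_. 0)"
        by auto
      moreover have "Kd m al (al m + be) s x = 0" using False by (simp add: Kd_def t_def)
      ultimately show ?thesis by simp
    qed
    finally show ?thesis .
  qed
  have "(\<integral>\<^sup>+x. ennreal (Kd (Suc m) al be s x) \<partial>(PiM {..<Suc m} (\<lambda>_. lborel)))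
      = (\<integral>\<^sup>+x. ennreal (Kd (Suc m) al be s x) \<partial>(PiM (insert m {..<m}) (\<lambda>_. lborel)))"
    by (simp add: lessThan_Suc)
  also have "\<dots> = (\<integral>\<^sup>+x. (\<integral>\<^sup>+y. ennreal (Kd (Suc m) al be s (x(m := y))) \<partial>lborel) \<partial>(PiM {..<m} (\<lambda>_. lborel)))"
  proof (rule lbp.product_nn_integral_insert)
    show "(\<lambda>x. ennreal (Kd (Suc m) al be s x)) \<in> borel_measurable (PiM (insert m {..<m}) (\<lambda>_. lborel))"
      using Kd_meas[of "Suc m" al be s] by (simp add: lessThan_Suc)
  qed auto
  also have "\<dots> = (\<integral>\<^sup>+x. ennreal (Kd m al (al m + be) s x) \<partial>(PiM {..<m} (\<lambda>_. lborel))) * ennreal (Beta (al m) be)"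
    by (simp add: inner nn_integral_multc)
  also have "\<dots> = ennreal (s powr ((\<Sum>a<m. al a) + (al m + be) - 1) * (\<Prod>a<m. Gamma (al a)) * Gamma (al m + be) / Gamma ((\<Sum>a<m. al a) + (al m + be)))
       * ennreal (Beta (al m) be)"
    by (subst Suc.IH[OF al' be' Suc.prems(3)]) simp
  also have "\<dots> = ennreal (s powr ((\<Sum>a<Suc m. al a) + be - 1) * (\<Prod>a<Suc m. Gamma (al a)) * Gamma be / Gamma ((\<Sum>a<Suc m. al a) + be))"
  proof -
    have g: "Gamma (al m + be) \<noteq> 0" using Gamma_real_nz[OF be'] .
    have nn: "0 \<le> s powr ((\<Sum>a<m. al a) + (al m + be) - 1) * (\<Prod>a<m. Gamma (al a)) * Gamma (al m + be) / Gamma ((\<Sum>a<m. al a) + (al m + be))"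
    proof -
      have "(\<Sum>a<m. al a) \<ge> 0" by (intro sum_nonneg) (use al' in \<open>auto intro: less_imp_le\<close>)
      then have "(\<Sum>a<m. al a) + (al m + be) > 0" using be' by linarith
      then show ?thesis using al' be'
        by (intro divide_nonneg_nonneg mult_nonneg_nonneg prod_nonneg less_imp_le[OF Gamma_real_pos]) auto
    qed
    show ?thesis
      using nn Beta_pos[OF alm Suc.prems(2)] g
      by (simp add: ennreal_mult'[symmetric] Beta_def algebra_simps)
  qed
  finally show ?case .
qed

definition Cd :: "(nat \<Rightarrow> real) \<Rightarrow> nat \<Rightarrow> real" where
  "Cd al M = Gamma (\<Sum>a<M. al a) / (\<Prod>a<M. Gamma (al a))"

lemma Cd_pos: "\<forall>a<M. al a > 0 \<Longrightarrow> M \<ge> 1 \<Longrightarrow> Cd al M > 0"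
proof -
  assume al: "\<forall>a<M. al a > 0" and M: "M \<ge> 1"
  have "0 \<in> {..<M}" using M by simp
  then have "{..<M} \<noteq> {}" by blast
  then have "(\<Sum>a<M. al a) > 0" using al by (intro sum_pos) auto
  then show ?thesis unfolding Cd_def using al
    by (intro divide_pos_pos Gamma_real_pos prod_pos) auto
qed

lemma se_Suc:
  fixes x :: "nat \<Rightarrow> real"
  shows "simplex_ext (Suc m) x a = (if a < m then x a else if a = m then 1 - (\<Sum>b<m. x b) else 0)"
  by (simp add: simplex_ext_def)

lemma dd_eq:
  fixes x :: "nat \<Rightarrow> real"
  shows "dir_dens al (Suc m) (simplex_ext (Suc m) x) = Cd al (Suc m) * Kd m al (al m) 1 x"
proof -
  have c: "(\<forall>a<Suc m. 0 < simplex_ext (Suc m) x a) \<longleftrightarrow> (\<forall>a<m. 0 < x a) \<and> 0 < 1 - (\<Sum>a<m. x a)"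
    by (auto simp: se_Suc less_Suc_eq)
  have p: "(\<Prod>a<Suc m. simplex_ext (Suc m) x a powr (al a - 1)) =
      (\<Prod>a<m. x a powr (al a - 1)) * (1 - (\<Sum>a<m. x a)) powr (al m - 1)"
    by (simp add: se_Suc)
  show ?thesis
  proof (cases "(\<forall>a<m. 0 < x a) \<and> 0 < 1 - (\<Sum>a<m. x a)")
    case True
    then show ?thesis unfolding dir_dens_def c p Kd_def Cd_def by simp
  next
    case False
    then have "dir_dens al (Suc m) (simplex_ext (Suc m) x) = 0" "Kd m al (al m) 1 x = 0"
      unfolding dir_dens_def c Kd_def by auto
    then show ?thesis by simp
  qed
qed

lemma dd_meas:
  assumes M: "M \<ge> 1"
  shows "(\<lambda>x. dir_dens al M (simplex_ext M x)) \<in> borel_measurable (PiM {..<M-1} (\<lambda>_. lborel))"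
proof -
  obtain m where m: "M = Suc m" using M by (cases M) auto
  show ?thesis unfolding m by (simp add: dd_eq)
qed

lemma se_meas [measurable]:
  "(\<lambda>x. simplex_ext M x a) \<in> borel_measurable (PiM {..<M-1} (\<lambda>_. lborel))"
proof (cases "a < M - 1")
  case True
  then show ?thesis unfolding simplex_ext_def by simp
next
  case False
  then show ?thesis unfolding simplex_ext_def by (cases "a = M - 1") auto
qed

lemma dd_nonneg: "\<forall>a<M. al a > 0 \<Longrightarrow> M \<ge> 1 \<Longrightarrow> dir_dens al M p \<ge> 0"
  using Cd_pos[of M al] unfolding dir_dens_def Cd_def[symmetric]
  by (auto intro!: mult_nonneg_nonneg prod_nonneg)

lemma dd_nn:
  assumes al: "\<forall>a<M. al a > 0" and M: "M \<ge> 1"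
  shows "(\<integral>\<^sup>+x. ennreal (dir_dens al M (simplex_ext M x)) \<partial>(PiM {..<M-1} (\<lambda>_. lborel))) = 1"
proof -
  obtain m where m: "M = Suc m" using M by (cases M) auto
  have al': "\<forall>a<m. al a > 0" and alm: "al m > 0" using al m by auto
  have C0: "Cd al (Suc m) \<ge> 0" using Cd_pos[of "Suc m" al] al m by simp
  have "(\<integral>\<^sup>+x. ennreal (dir_dens al M (simplex_ext M x)) \<partial>(PiM {..<M-1} (\<lambda>_. lborel)))
     = (\<integral>\<^sup>+x. ennreal (Cd al (Suc m)) * ennreal (Kd m al (al m) 1 x) \<partial>(PiM {..<m} (\<lambda>_. lborel)))"
    unfolding m using C0 Kd_nonneg by (simp add: dd_eq ennreal_mult' del: ennreal_mult_eq_top_iff)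
  also have "\<dots> = ennreal (Cd al (Suc m)) * (\<integral>\<^sup>+x. ennreal (Kd m al (al m) 1 x) \<partial>(PiM {..<m} (\<lambda>_. lborel)))"
    by (rule nn_integral_cmult) measurable
  also have "\<dots> = ennreal (Cd al (Suc m)) * ennreal (1 powr ((\<Sum>a<m. al a) + al m - 1) * (\<Prod>a<m. Gamma (al a)) * Gamma (al m) / Gamma ((\<Sum>a<m. al a) + al m))"
    by (subst Kd_int[OF al' alm]) auto
  also have "\<dots> = 1"
  proof -
    have "(\<Prod>a<m. Gamma (al a)) > 0" using al' by (intro prod_pos) auto
    moreover have "Gamma (al m) > 0" using alm by simp
    moreover have "Gamma ((\<Sum>a<m. al a) + al m) > 0"
      using al' alm by (intro Gamma_real_pos add_nonneg_pos sum_nonneg) (auto intro: less_imp_le)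
    moreover have "\<forall>a\<in>{..<m}. Gamma (al a) \<noteq> 0" using al' Gamma_real_nz by auto
    ultimately show ?thesis using C0
      by (simp add: ennreal_mult'[symmetric] Cd_def)
  qed
  finally show ?thesis .
qed

lemma dd_int:
  assumes al: "\<forall>a<M. al a > 0" and M: "M \<ge> 1"
  shows "integrable (PiM {..<M-1} (\<lambda>_. lborel)) (\<lambda>x. dir_dens al M (simplex_ext M x))"
    "integral\<^sup>L (PiM {..<M-1} (\<lambda>_. lborel)) (\<lambda>x. dir_dens al M (simplex_ext M x)) = 1"
proof -
  show "integrable (PiM {..<M-1} (\<lambda>_. lborel)) (\<lambda>x. dir_dens al M (simplex_ext M x))"
    by (rule integrableI_nn_integral_finite[where x=1]) (use dd_nn[OF al M] dd_nonneg[OF al M] dd_meas[OF M] in auto)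
  show "integral\<^sup>L (PiM {..<M-1} (\<lambda>_. lborel)) (\<lambda>x. dir_dens al M (simplex_ext M x)) = 1"
    by (subst integral_eq_nn_integral) (use dd_nn[OF al M] dd_nonneg[OF al M] dd_meas[OF M] in auto)
qed

lemma dd_shift:
  assumes al: "\<forall>b<M. al b > 0" and M: "M \<ge> 1" and a: "a < M" and e: "e < al a"
    and p: "\<forall>b<M. p b > 0"
  shows "dir_dens al M p * p a powr (-e) = (Cd al M / Cd (al(a := al a - e)) M) * dir_dens (al(a := al a - e)) M p"
proof -
  let ?al' = "al(a := al a - e)"
  have al': "\<forall>b<M. ?al' b > 0" using al e by auto
  have C: "Cd ?al' M > 0" by (rule Cd_pos[OF al' M])
  have "(\<Prod>b<M. p b powr (al b - 1)) * p a powr (-e) = (\<Prod>b<M. p b powr (?al' b - 1))"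
  proof -
    have "(\<Prod>b<M. p b powr (al b - 1)) = p a powr (al a - 1) * (\<Prod>b\<in>{..<M}-{a}. p b powr (al b - 1))"
      using a by (subst prod.remove[of _ a]) auto
    moreover have "(\<Prod>b<M. p b powr (?al' b - 1)) = p a powr (al a - e - 1) * (\<Prod>b\<in>{..<M}-{a}. p b powr (?al' b - 1))"
      using a by (subst prod.remove[of _ a]) auto
    moreover have "(\<Prod>b\<in>{..<M}-{a}. p b powr (?al' b - 1)) = (\<Prod>b\<in>{..<M}-{a}. p b powr (al b - 1))"
      by (rule prod.cong) auto
    moreover have "p a powr (al a - 1) * p a powr (-e) = p a powr (al a - 1 + -e)"
      by (rule powr_add[symmetric])
    moreover have "al a - 1 + -e = al a - e - 1" by simp
    ultimately show ?thesis by (simp add: algebra_simps)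
  qed
  then show ?thesis using p C unfolding dir_dens_def Cd_def[symmetric] by (simp add: field_simps)
qed

lemma se_le1:
  fixes x :: "nat \<Rightarrow> real"
  assumes M: "M \<ge> 1" and a: "a < M" and pos: "\<forall>b<M. 0 < simplex_ext M x b"
  shows "simplex_ext M x a \<le> 1"
proof -
  obtain m where m: "M = Suc m" using M by (cases M) auto
  have xp: "\<forall>b<m. 0 < x b" and s1: "0 < 1 - (\<Sum>b<m. x b)"
    using pos unfolding m se_Suc by (auto simp: less_Suc_eq)
  have sn: "(\<Sum>b<m. x b) \<ge> 0" using xp by (intro sum_nonneg) (auto intro: less_imp_le)
  show ?thesis
  proof (cases "a < m")
    case True
    have "x a \<le> (\<Sum>b<m. x b)" using True xp
      by (intro member_le_sum) (auto intro: less_imp_le)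
    then show ?thesis using True s1 unfolding m se_Suc by simp
  next
    case False
    then have "a = m" using a m by simp
    then show ?thesis using sn unfolding m se_Suc by simp
  qed
qed

lemma dd_int_ln:
  assumes al: "\<forall>b<M. al b > 0" and M: "M \<ge> 1" and a: "a < M"
  shows "integrable (PiM {..<M-1} (\<lambda>_. lborel)) (\<lambda>x. dir_dens al M (simplex_ext M x) * ln (simplex_ext M x a))"
proof -
  define e where "e = al a / 2"
  have e: "0 < e" "e < al a" using al a by (auto simp: e_def)
  let ?al' = "al(a := al a - e)"
  let ?c = "Cd al M / Cd ?al' M"
  have al': "\<forall>b<M. ?al' b > 0" using al e by auto
  have "integrable (PiM {..<M-1} (\<lambda>_. lborel)) (\<lambda>x. ?c / e * dir_dens ?al' M (simplex_ext M x))"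
    by (rule integrable_mult_right[OF dd_int(1)[OF al' M]])
  then show ?thesis
  proof (rule Bochner_Integration.integrable_bound)
    show "(\<lambda>x. dir_dens al M (simplex_ext M x) * ln (simplex_ext M x a)) \<in> borel_measurable (PiM {..<M-1} (\<lambda>_. lborel))"
      using dd_meas[OF M, of al] by measurable
    show "AE x in PiM {..<M-1} (\<lambda>_. lborel). norm (dir_dens al M (simplex_ext M x) * ln (simplex_ext M x a))
        \<le> norm (?c / e * dir_dens ?al' M (simplex_ext M x))"
    proof (intro AE_I2)
      fix x :: "nat \<Rightarrow> real"
      show "norm (dir_dens al M (simplex_ext M x) * ln (simplex_ext M x a)) \<le> norm (?c / e * dir_dens ?al' M (simplex_ext M x))"
      proof (cases "\<forall>b<M. 0 < simplex_ext M x b")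
        case True
        have pa: "0 < simplex_ext M x a" "simplex_ext M x a \<le> 1"
          using True a se_le1[OF M a True] by auto
        have "norm (dir_dens al M (simplex_ext M x) * ln (simplex_ext M x a)) = dir_dens al M (simplex_ext M x) * \<bar>ln (simplex_ext M x a)\<bar>"
          using dd_nonneg[OF al M] by (simp add: abs_mult)
        also have "\<dots> \<le> dir_dens al M (simplex_ext M x) * (simplex_ext M x a powr (-e) / e)"
          by (intro mult_left_mono ln_bound_small dd_nonneg al pa e M)
        also have "\<dots> = (dir_dens al M (simplex_ext M x) * simplex_ext M x a powr (-e)) / e" by simp
        also have "\<dots> = ?c / e * dir_dens ?al' M (simplex_ext M x)"
          using dd_shift[OF al M a e(2) True] by simp
        also have "\<dots> \<le> norm (?c / e * dir_dens ?al' M (simplex_ext M x))" by (simp only: real_norm_def abs_ge_self)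
        finally show ?thesis .
      next
        case False
        then have "dir_dens al M (simplex_ext M x) = 0" unfolding dir_dens_def by auto
        then show ?thesis by simp
      qed
    qed
  qed
qed

lemma ln_dd:
  assumes al: "\<forall>b<M. al b > 0" and M: "M \<ge> 1" and p: "\<forall>b<M. p b > 0"
  shows "ln (dir_dens al M p) = ln (Cd al M) + (\<Sum>b<M. (al b - 1) * ln (p b))"
proof -
  have C: "Cd al M > 0" by (rule Cd_pos[OF al M])
  have P: "(\<Prod>b<M. p b powr (al b - 1)) > 0" using p by (intro prod_pos) auto
  have "dir_dens al M p = Cd al M * (\<Prod>b<M. p b powr (al b - 1))"
    using p unfolding dir_dens_def Cd_def by simp
  then have "ln (dir_dens al M p) = ln (Cd al M) + ln (\<Prod>b<M. p b powr (al b - 1))"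
    using C P by (simp add: ln_mult_pos)
  also have "ln (\<Prod>b<M. p b powr (al b - 1)) = (\<Sum>b<M. ln (p b powr (al b - 1)))"
    using p by (subst ln_prod) auto
  also have "\<dots> = (\<Sum>b<M. (al b - 1) * ln (p b))" by (simp add: ln_powr)
  finally show ?thesis .
qed

lemma dd_ln_pt:
  assumes ph: "\<forall>b<M. ph b > 0" and al: "\<forall>b<M. al b > 0" and M: "M \<ge> 1"
  shows "dir_dens ph M (simplex_ext M x) * ln (dir_dens al M (simplex_ext M x)) =
    ln (Cd al M) * dir_dens ph M (simplex_ext M x) +
    (\<Sum>b<M. (al b - 1) * (dir_dens ph M (simplex_ext M x) * ln (simplex_ext M x b)))"
proof (cases "\<forall>b<M. 0 < simplex_ext M x b")
  case True
  show ?thesis by (subst ln_dd[OF al M True]) (simp add: algebra_simps sum_distrib_left)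
next
  case False
  then have "dir_dens ph M (simplex_ext M x) = 0" unfolding dir_dens_def by auto
  then show ?thesis by simp
qed

lemma dd_ln:
  assumes ph: "\<forall>b<M. ph b > 0" and al: "\<forall>b<M. al b > 0" and M: "M \<ge> 1"
  shows "integrable (PiM {..<M-1} (\<lambda>_. lborel)) (\<lambda>x. dir_dens ph M (simplex_ext M x) * ln (dir_dens al M (simplex_ext M x)))"
    "E_dir ph M (\<lambda>p. ln (dir_dens al M p)) = ln (Cd al M) + (\<Sum>b<M. (al b - 1) * E_dir ph M (\<lambda>p. ln (p b)))"
proof -
  have i: "integrable (PiM {..<M-1} (\<lambda>_. lborel)) (\<lambda>x. dir_dens ph M (simplex_ext M x) * ln (simplex_ext M x b))" if "b < M" for b
    using dd_int_ln[OF ph M that] .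
  show "integrable (PiM {..<M-1} (\<lambda>_. lborel)) (\<lambda>x. dir_dens ph M (simplex_ext M x) * ln (dir_dens al M (simplex_ext M x)))"
  proof -
    have eq: "(\<lambda>x. dir_dens ph M (simplex_ext M x) * ln (dir_dens al M (simplex_ext M x))) =
      (\<lambda>x. ln (Cd al M) * dir_dens ph M (simplex_ext M x) +
       (\<Sum>b<M. (al b - 1) * (dir_dens ph M (simplex_ext M x) * ln (simplex_ext M x b))))"
      by (rule ext) (rule dd_ln_pt[OF ph al M])
    show ?thesis unfolding eq
      by (intro Bochner_Integration.integrable_add Bochner_Integration.integrable_sum Bochner_Integration.integrable_mult_right dd_int(1)[OF ph M] i) auto
  qed
  show "E_dir ph M (\<lambda>p. ln (dir_dens al M p)) = ln (Cd al M) + (\<Sum>b<M. (al b - 1) * E_dir ph M (\<lambda>p. ln (p b)))"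
  proof -
    have eq: "(\<lambda>x. dir_dens ph M (simplex_ext M x) * ln (dir_dens al M (simplex_ext M x))) =
      (\<lambda>x. ln (Cd al M) * dir_dens ph M (simplex_ext M x) +
       (\<Sum>b<M. (al b - 1) * (dir_dens ph M (simplex_ext M x) * ln (simplex_ext M x b))))"
      by (rule ext) (rule dd_ln_pt[OF ph al M])
    have ii: "integrable (PiM {..<M-1} (\<lambda>_. lborel)) (\<lambda>x. \<Sum>b<M. (al b - 1) * (dir_dens ph M (simplex_ext M x) * ln (simplex_ext M x b)))"
      by (intro Bochner_Integration.integrable_sum Bochner_Integration.integrable_mult_right i) auto
    show ?thesis unfolding E_dir_def eq
      using dd_int[OF ph M] i ii by (simp add: integral_sum)
  qed
qed

lemma dd_gibbs:
  assumes ph: "\<forall>b<M. ph b > 0" and al: "\<forall>b<M. al b > 0" and M: "M \<ge> 1"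
  shows "E_dir ph M (\<lambda>p. ln (dir_dens al M p)) \<le> E_dir ph M (\<lambda>p. ln (dir_dens ph M p))"
  unfolding E_dir_def
proof (rule gibbs)
  fix x assume "0 < dir_dens ph M (simplex_ext M x)"
  then have p: "\<forall>b<M. 0 < simplex_ext M x b" unfolding dir_dens_def by (auto split: if_splits)
  have "Cd al M > 0" by (rule Cd_pos[OF al M])
  moreover have "(\<Prod>b<M. simplex_ext M x b powr (al b - 1)) > 0" using p by (intro prod_pos) auto
  moreover have "dir_dens al M (simplex_ext M x) = Cd al M * (\<Prod>b<M. simplex_ext M x b powr (al b - 1))"
    using p unfolding dir_dens_def Cd_def by simp
  ultimately show "0 < dir_dens al M (simplex_ext M x)" by simp
qed (use dd_nonneg[OF ph M] dd_nonneg[OF al M] dd_meas[OF M] dd_int[OF ph M] dd_int[OF al M] dd_ln[OF ph al M] dd_ln[OF ph ph M] in auto)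

lemma sum_upd:
  fixes f g :: "'a \<Rightarrow> real"
  assumes "finite S" "i \<in> S" "\<And>j. j \<in> S \<Longrightarrow> j \<noteq> i \<Longrightarrow> g j = f j"
  shows "sum g S = sum f S + (g i - f i)"
proof -
  have "sum g S = g i + sum g (S - {i})" using assms by (simp add: sum.remove)
  moreover have "sum f S = f i + sum f (S - {i})" using assms by (simp add: sum.remove)
  moreover have "sum g (S - {i}) = sum f (S - {i})" using assms by (intro sum.cong) auto
  ultimately show ?thesis by simp
qed

lemma sum_upd':
  fixes f g :: "'a \<Rightarrow> real"
  assumes "finite S" "i \<in> S" "\<And>j. j \<in> S \<Longrightarrow> j \<noteq> i \<Longrightarrow> g j = f j" "g i = f i + d"
  shows "sum g S = sum f S + d"
  using sum_upd[OF assms(1-3)] assms(4) by simp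

lemma hists_finite: "finite (hists Z t)"
proof -
  have "hists Z t = {zs. set zs \<subseteq> {1..Z} \<and> length zs = Suc t}" by (auto simp: hists_def)
  then show ?thesis using finite_lists_length_eq[of "{1..Z}" "Suc t"] by simp
qed

lemma hists_ne: "Z \<ge> 1 \<Longrightarrow> replicate (Suc t) 1 \<in> hists Z t"
  by (auto simp: hists_def)

lemma hists_nth: "zs \<in> hists Z t \<Longrightarrow> \<tau> \<le> t \<Longrightarrow> zs ! \<tau> \<in> {1..Z}"
proof -
  assume "zs \<in> hists Z t" "\<tau> \<le> t"
  then have "zs ! \<tau> \<in> set zs" "set zs \<subseteq> {1..Z}" by (auto simp: hists_def intro!: nth_mem)
  then show ?thesis by blast
qed

lemma vhists_finite: "finite (vhists M t)"
  unfolding vhists_def by (intro finite_PiE) (auto simp: hists_finite)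

lemma joint_t_pos: "fsc_joint (eta_t P n) (om_t P n) (pi_t M P n) acts obsv zs t > 0"
  unfolding fsc_joint_def eta_t_def om_t_def pi_t_def by (intro mult_pos_pos prod_pos) auto

lemma marg_t_pos: "nZ M n \<ge> 1 \<Longrightarrow> marg_t M P n k t > 0"
  unfolding marg_t_def fsc_marg_def
  by (rule sum_pos2[OF hists_finite hists_ne]) (auto intro: less_imp_le joint_t_pos)

lemma marg_t_nonneg: "marg_t M P n k t \<ge> 0"
  unfolding marg_t_def fsc_marg_def by (intro sum_nonneg less_imp_le joint_t_pos)

lemma cond_t_nonneg: "cond_t M P n k t zs \<ge> 0"
  unfolding cond_t_def fsc_cond_def marg_t_def[symmetric]
  using marg_t_nonneg[of M P n k t] joint_t_pos
  by (simp add: marg_t_def fsc_marg_def less_imp_le)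

lemma cond_t_sum: "nZ M n \<ge> 1 \<Longrightarrow> (\<Sum>zs\<in>hists (nZ M n) t. cond_t M P n k t zs) = 1"
  using marg_t_pos[of M n P k t]
  unfolding cond_t_def fsc_cond_def marg_t_def fsc_marg_def
  by (simp add: sum_divide_distrib[symmetric])

lemma marg_sum:
  fixes c :: "'i \<Rightarrow> 'z \<Rightarrow> real"
  assumes I: "finite I" "n \<in> I" and H: "\<And>m. m \<in> I \<Longrightarrow> finite (H m)"
    and one: "\<And>m. m \<in> I \<Longrightarrow> (\<Sum>z\<in>H m. c m z) = 1"
  shows "(\<Sum>zv\<in>PiE I H. (\<Prod>m\<in>I. c m (zv m)) * \<phi> (zv n)) = (\<Sum>z\<in>H n. c n z * \<phi> z)"
proof -
  define c' where "c' = (\<lambda>m z. if m = n then c m z * \<phi> z else c m z)"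
  have "(\<Sum>zv\<in>PiE I H. (\<Prod>m\<in>I. c m (zv m)) * \<phi> (zv n)) = (\<Sum>zv\<in>PiE I H. \<Prod>m\<in>I. c' m (zv m))"
  proof (rule sum.cong)
    fix zv assume "zv \<in> PiE I H"
    have "(\<Prod>m\<in>I. c' m (zv m)) = c' n (zv n) * (\<Prod>m\<in>I - {n}. c' m (zv m))"
      using I by (simp add: prod.remove)
    also have "(\<Prod>m\<in>I - {n}. c' m (zv m)) = (\<Prod>m\<in>I - {n}. c m (zv m))"
      by (rule prod.cong) (auto simp: c'_def)
    also have "(\<Prod>m\<in>I. c m (zv m)) = c n (zv n) * (\<Prod>m\<in>I - {n}. c m (zv m))"
      using I by (simp add: prod.remove)
    ultimately show "(\<Prod>m\<in>I. c m (zv m)) * \<phi> (zv n) = (\<Prod>m\<in>I. c' m (zv m))"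
      by (simp add: c'_def)
  qed simp
  also have "\<dots> = (\<Prod>m\<in>I. \<Sum>z\<in>H m. c' m z)"
    by (rule prod_sum_PiE[symmetric]) (use I H in auto)
  also have "\<dots> = (\<Sum>z\<in>H n. c' n z) * (\<Prod>m\<in>I - {n}. \<Sum>z\<in>H m. c' m z)"
    using I by (simp add: prod.remove)
  also have "(\<Prod>m\<in>I - {n}. \<Sum>z\<in>H m. c' m z) = 1"
    by (rule prod.neutral) (auto simp: c'_def one)
  finally show ?thesis by (simp add: c'_def)
qed

lemma nu_t_nonneg:
  assumes wf: "wf_model M" and k: "k \<in> {1..nK M}" and t: "t \<le> T M k"
  shows "nu_t M P k t \<ge> 0"
proof -
  have rt: "rtil M k' t' \<ge> 0" if "k' \<in> {1..nK M}" "t' \<le> T M k'" for k' t'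
    using wf that unfolding rtil_def wf_model_def
    by (intro divide_nonneg_nonneg mult_nonneg_nonneg prod_nonneg zero_le_power) (auto intro: less_imp_le)
  have "Vhat_t M P \<ge> 0" unfolding Vhat_t_def
    by (intro mult_nonneg_nonneg sum_nonneg prod_nonneg rt marg_t_nonneg) auto
  then show ?thesis using wf k t unfolding nu_t_def wf_model_def
    by (intro divide_nonneg_nonneg mult_nonneg_nonneg prod_nonneg zero_le_power marg_t_nonneg) (auto intro: less_imp_le)
qed

lemma qz_marg:
  assumes wf: "wf_model M" and n: "n \<in> {1..nAg M}"
  shows "(\<Sum>zv\<in>vhists M t. qz M P0 k t zv * \<phi> (zv n)) =
     nu_t M P0 k t * (\<Sum>zs\<in>hists (nZ M n) t. cond_t M P0 n k t zs * \<phi> zs)"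
proof -
  have "(\<Sum>zv\<in>vhists M t. qz M P0 k t zv * \<phi> (zv n)) =
      nu_t M P0 k t * (\<Sum>zv\<in>vhists M t. (\<Prod>m\<in>{1..nAg M}. cond_t M P0 m k t (zv m)) * \<phi> (zv n))"
    unfolding qz_def by (simp add: sum_distrib_left mult.assoc)
  also have "(\<Sum>zv\<in>vhists M t. (\<Prod>m\<in>{1..nAg M}. cond_t M P0 m k t (zv m)) * \<phi> (zv n)) =
      (\<Sum>zs\<in>hists (nZ M n) t. cond_t M P0 n k t zs * \<phi> zs)"
    unfolding vhists_def
    by (rule marg_sum[OF _ n]) (use wf in \<open>auto simp: hists_finite wf_model_def intro!: cond_t_sum\<close>)
  finally show ?thesis .
qed

definition "cD M P0 P = (1 / real (nK M)) * (\<Sum>k\<in>{1..nK M}. \<Sum>t\<le>T M k. \<Sum>zv\<in>vhists M t.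
        qz M P0 k t zv * (ln (rtil M k t) + (\<Sum>n\<in>{1..nAg M}. Ejoint M P n k t (zv n))))"
definition "cS1 M P = (\<Sum>n\<in>{1..nAg M}. \<Sum>i\<in>{1..nZ M n}. E_stick_prior (dlt P n i) (mu P n i) (gg P n) (hh P n))"
definition "cS2 M P = (\<Sum>n\<in>{1..nAg M}. \<Sum>a<nA M n. \<Sum>ob<nO M n. \<Sum>i\<in>{1..nZ M n}. \<Sum>j\<in>{1..nZ M n}.
        E_stick_prior (sgm P n a ob i j) (lam P n a ob i j) (aa P n a ob i) (bb P n a ob i))"
definition "cPi M P = (\<Sum>n\<in>{1..nAg M}. \<Sum>i\<in>{1..nZ M n}.
        E_dir (phi P n i) (nA M n) (\<lambda>p. ln (dir_dens (theta M n i) (nA M n) p)))"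
definition "cG1 M P = (\<Sum>n\<in>{1..nAg M}. E_gamma (gg P n) (hh P n) (\<lambda>r. ln (gamma_pdf (he M) (hf M) r)))"
definition "cG2 M P = (\<Sum>n\<in>{1..nAg M}. \<Sum>a<nA M n. \<Sum>ob<nO M n. \<Sum>i\<in>{1..nZ M n}.
        E_gamma (aa P n a ob i) (bb P n a ob i) (\<lambda>x. ln (gamma_pdf (hc M n a ob) (hd M n a ob) x)))"
definition "cH1 M P = (\<Sum>n\<in>{1..nAg M}. \<Sum>i\<in>{1..nZ M n}.
          E_beta (dlt P n i) (mu P n i) (\<lambda>x. ln (beta_pdf (dlt P n i) (mu P n i) x)))"
definition "cH2 M P = (\<Sum>n\<in>{1..nAg M}. \<Sum>a<nA M n. \<Sum>ob<nO M n. \<Sum>i\<in>{1..nZ M n}. \<Sum>j\<in>{1..nZ M n}.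
          E_beta (sgm P n a ob i j) (lam P n a ob i j) (\<lambda>x. ln (beta_pdf (sgm P n a ob i j) (lam P n a ob i j) x)))"
definition "cH3 M P = (\<Sum>n\<in>{1..nAg M}. E_gamma (gg P n) (hh P n) (\<lambda>x. ln (gamma_pdf (gg P n) (hh P n) x)))"
definition "cH4 M P = (\<Sum>n\<in>{1..nAg M}. \<Sum>a<nA M n. \<Sum>ob<nO M n. \<Sum>i\<in>{1..nZ M n}.
          E_gamma (aa P n a ob i) (bb P n a ob i) (\<lambda>x. ln (gamma_pdf (aa P n a ob i) (bb P n a ob i) x)))"
definition "cH5 M P = (\<Sum>n\<in>{1..nAg M}. \<Sum>i\<in>{1..nZ M n}.
          E_dir (phi P n i) (nA M n) (\<lambda>p. ln (dir_dens (phi P n i) (nA M n) p)))"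
definition "cQ M P0 = (1 / real (nK M)) * (\<Sum>k\<in>{1..nK M}. \<Sum>t\<le>T M k. \<Sum>zv\<in>vhists M t.
          qz M P0 k t zv * ln (qz M P0 k t zv))"

lemma ELBO_split: "ELBO M P0 P = cD M P0 P + cS1 M P + cS2 M P + cPi M P + cG1 M P + cG2 M P
   - (cH1 M P + cH2 M P + cH3 M P + cH4 M P + cH5 M P + cQ M P0)"
  unfolding ELBO_def cD_def cS1_def cS2_def cPi_def cG1_def cG2_def cH1_def cH2_def cH3_def cH4_def cH5_def cQ_def
  by simp

lemma D_change:
  assumes wf: "wf_model M" and n: "n \<in> {1..nAg M}"
    and oth: "\<And>n' k t zs. n' \<in> {1..nAg M} \<Longrightarrow> n' \<noteq> n \<Longrightarrow> Ejoint M P' n' k t zs = Ejoint M P n' k t zs"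
    and cur: "\<And>k t zs. k \<in> {1..nK M} \<Longrightarrow> t \<le> T M k \<Longrightarrow> zs \<in> hists (nZ M n) t \<Longrightarrow>
       Ejoint M P' n k t zs = Ejoint M P n k t zs + \<delta> k t zs"
  shows "cD M P0 P' = cD M P0 P + (1 / real (nK M)) * (\<Sum>k\<in>{1..nK M}. \<Sum>t\<le>T M k.
      nu_t M P0 k t * (\<Sum>zs\<in>hists (nZ M n) t. cond_t M P0 n k t zs * \<delta> k t zs))"
proof -
  have inner: "(\<Sum>zv\<in>vhists M t. qz M P0 k t zv * (ln (rtil M k t) + (\<Sum>n'\<in>{1..nAg M}. Ejoint M P' n' k t (zv n')))) =
     (\<Sum>zv\<in>vhists M t. qz M P0 k t zv * (ln (rtil M k t) + (\<Sum>n'\<in>{1..nAg M}. Ejoint M P n' k t (zv n'))))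
     + nu_t M P0 k t * (\<Sum>zs\<in>hists (nZ M n) t. cond_t M P0 n k t zs * \<delta> k t zs)"
    if k: "k \<in> {1..nK M}" and t: "t \<le> T M k" for k t
  proof -
    have "(\<Sum>zv\<in>vhists M t. qz M P0 k t zv * (ln (rtil M k t) + (\<Sum>n'\<in>{1..nAg M}. Ejoint M P' n' k t (zv n')))) =
       (\<Sum>zv\<in>vhists M t. qz M P0 k t zv * (ln (rtil M k t) + (\<Sum>n'\<in>{1..nAg M}. Ejoint M P n' k t (zv n')))
          + qz M P0 k t zv * \<delta> k t (zv n))"
    proof (rule sum.cong)
      fix zv assume zv: "zv \<in> vhists M t"
      have zn: "zv n \<in> hists (nZ M n) t" using zv n unfolding vhists_def by (auto simp: PiE_iff)
      have "(\<Sum>n'\<in>{1..nAg M}. Ejoint M P' n' k t (zv n')) =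
          (\<Sum>n'\<in>{1..nAg M}. Ejoint M P n' k t (zv n')) + (Ejoint M P' n k t (zv n) - Ejoint M P n k t (zv n))"
        by (rule sum_upd) (use n oth in auto)
      also have "Ejoint M P' n k t (zv n) - Ejoint M P n k t (zv n) = \<delta> k t (zv n)"
        using cur[OF k t zn] by simp
      finally show "qz M P0 k t zv * (ln (rtil M k t) + (\<Sum>n'\<in>{1..nAg M}. Ejoint M P' n' k t (zv n'))) =
         qz M P0 k t zv * (ln (rtil M k t) + (\<Sum>n'\<in>{1..nAg M}. Ejoint M P n' k t (zv n')))
          + qz M P0 k t zv * \<delta> k t (zv n)" by (simp add: algebra_simps)
    qed simp
    also have "\<dots> = (\<Sum>zv\<in>vhists M t. qz M P0 k t zv * (ln (rtil M k t) + (\<Sum>n'\<in>{1..nAg M}. Ejoint M P n' k t (zv n'))))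
          + (\<Sum>zv\<in>vhists M t. qz M P0 k t zv * \<delta> k t (zv n))"
      by (rule sum.distrib)
    also have "(\<Sum>zv\<in>vhists M t. qz M P0 k t zv * \<delta> k t (zv n)) =
        nu_t M P0 k t * (\<Sum>zs\<in>hists (nZ M n) t. cond_t M P0 n k t zs * \<delta> k t zs)"
      by (rule qz_marg[OF wf n])
    finally show ?thesis .
  qed
  have "cD M P0 P' = (1 / real (nK M)) * (\<Sum>k\<in>{1..nK M}. \<Sum>t\<le>T M k.
      (\<Sum>zv\<in>vhists M t. qz M P0 k t zv * (ln (rtil M k t) + (\<Sum>n'\<in>{1..nAg M}. Ejoint M P n' k t (zv n'))))
     + nu_t M P0 k t * (\<Sum>zs\<in>hists (nZ M n) t. cond_t M P0 n k t zs * \<delta> k t zs))"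
    unfolding cD_def by (intro arg_cong2[where f="(*)"] refl sum.cong inner) auto
  also have "\<dots> = cD M P0 P + (1 / real (nK M)) * (\<Sum>k\<in>{1..nK M}. \<Sum>t\<le>T M k.
      nu_t M P0 k t * (\<Sum>zs\<in>hists (nZ M n) t. cond_t M P0 n k t zs * \<delta> k t zs))"
    unfolding cD_def by (simp add: sum.distrib distrib_left)
  finally show ?thesis .
qed

lemma beta_argmax:
  assumes A: "A > 0" and B: "B > 0" and x: "x > 0" and y: "y > 0"
  shows "(A-1) * E_beta x y ln + (B-1) * E_beta x y (\<lambda>v. ln (1-v)) - E_beta x y (\<lambda>v. ln (beta_pdf x y v))
      \<le> (A-1) * E_beta A B ln + (B-1) * E_beta A B (\<lambda>v. ln (1-v)) - E_beta A B (\<lambda>v. ln (beta_pdf A B v))"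
  using beta_ln_pdf(2)[OF x y A B] beta_ln_pdf(2)[OF A B A B] beta_gibbs[OF x y A B] by simp

lemma gamma_argmax:
  assumes A: "A > 0" and B: "B > 0" and x: "x > 0" and y: "y > 0"
  shows "(A-1) * E_gamma x y ln - B * E_gamma x y (\<lambda>r. r) - E_gamma x y (\<lambda>r. ln (gamma_pdf x y r))
      \<le> (A-1) * E_gamma A B ln - B * E_gamma A B (\<lambda>r. r) - E_gamma A B (\<lambda>r. ln (gamma_pdf A B r))"
  using gamma_ln_pdf(2)[OF x y A B] gamma_ln_pdf(2)[OF A B A B] gamma_gibbs[OF x y A B] by simp

lemma dir_argmax:
  assumes al: "\<forall>b<M. al b > 0" and ph: "\<forall>b<M. ph b > 0" and M: "M \<ge> 1"
  shows "(\<Sum>b<M. (al b - 1) * E_dir ph M (\<lambda>p. ln (p b))) - E_dir ph M (\<lambda>p. ln (dir_dens ph M p))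
      \<le> (\<Sum>b<M. (al b - 1) * E_dir al M (\<lambda>p. ln (p b))) - E_dir al M (\<lambda>p. ln (dir_dens al M p))"
  using dd_ln(2)[OF ph al M] dd_ln(2)[OF al al M] dd_gibbs[OF ph al M] by simp

lemma sum_group_filter:
  fixes f :: "'a \<Rightarrow> real"
  assumes "finite S" "finite H"
  shows "(\<Sum>m\<in>S. \<Sum>zs\<in>{zs\<in>H. g zs = m}. f zs) = (\<Sum>zs\<in>H. if g zs \<in> S then f zs else 0)"
proof -
  have "(\<Sum>m\<in>S. \<Sum>zs\<in>{zs\<in>H. g zs = m}. f zs) = (\<Sum>m\<in>S. \<Sum>zs\<in>H. if g zs = m then f zs else 0)"
    using assms by (simp add: sum.inter_filter)
  also have "\<dots> = (\<Sum>zs\<in>H. \<Sum>m\<in>S. if g zs = m then f zs else 0)" by (rule sum.swap)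
  also have "\<dots> = (\<Sum>zs\<in>H. if g zs \<in> S then f zs else 0)"
    using assms by (simp add: sum.delta)
  finally show ?thesis .
qed

lemma qm1_nonneg: "wf_model M \<Longrightarrow> k \<in> {1..nK M} \<Longrightarrow> t \<le> T M k \<Longrightarrow> qm1 M P0 n k t \<tau> i \<ge> 0"
  unfolding qm1_def by (intro mult_nonneg_nonneg nu_t_nonneg sum_nonneg cond_t_nonneg) auto

lemma qm2_nonneg: "wf_model M \<Longrightarrow> k \<in> {1..nK M} \<Longrightarrow> t \<le> T M k \<Longrightarrow> qm2 M P0 n k t \<tau> i j \<ge> 0"
  unfolding qm2_def by (intro mult_nonneg_nonneg nu_t_nonneg sum_nonneg cond_t_nonneg) auto

lemma part1:
  assumes wf: "wf_model M" and ok: "vparams_ok M P" and n: "n \<in> {1..nAg M}" and i: "i \<in> {1..nZ M n}"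
  shows "is_argmax
        (\<lambda>(x, y). ELBO M P0 (P\<lparr>dlt := (dlt P)(n := (dlt P n)(i := x)),
                                mu := (mu P)(n := (mu P n)(i := y))\<rparr>))
        {(x, y). 0 < x \<and> 0 < y}
        (upd_dlt M P0 n i, upd_mu M P0 P n i)"
proof -
  define Pd where "Pd x y = P\<lparr>dlt := (dlt P)(n := (dlt P n)(i := x)), mu := (mu P)(n := (mu P n)(i := y))\<rparr>" for x y
  define g where "g = gg P n"
  define h where "h = hh P n"
  define x0 where "x0 = dlt P n i"
  define y0 where "y0 = mu P n i"
  define A where "A = upd_dlt M P0 n i"
  define B where "B = upd_mu M P0 P n i"
  define H where "H = hists (nZ M n)"
  have g0: "g > 0" and h0: "h > 0" and x00: "x0 > 0" and y00: "y0 > 0"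
    using ok n i unfolding vparams_ok_def g_def h_def x0_def y0_def by auto
  have i1: "i \<ge> 1" using i by simp
  define F where "F x y = (A - 1) * E_beta x y ln + (B - g / h) * E_beta x y (\<lambda>v. ln (1 - v))
      + E_stick_prior x y g h - E_beta x y (\<lambda>v. ln (beta_pdf x y v))" for x y
  have main: "ELBO M P0 (Pd x y) = ELBO M P0 P - F x0 y0 + F x y" for x y
  proof -
    define Lb where "Lb = E_beta x y ln - E_beta x0 y0 ln"
    define Lm where "Lm = E_beta x y (\<lambda>v. ln (1 - v)) - E_beta x0 y0 (\<lambda>v. ln (1 - v))"
    define \<delta> where "\<delta> = (\<lambda>(k::nat) (t::nat) zs. (if zs ! 0 = i then Lb else 0) + (if i < zs ! 0 then Lm else 0))"
    have eta: "Elog_eta (Pd x y) n j = Elog_eta P n j + (if j = i then Lb else 0) + (if i < j then Lm else 0)" for j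
    proof -
      have s: "(\<Sum>m\<in>{1..<j}. E_beta (dlt (Pd x y) n m) (mu (Pd x y) n m) (\<lambda>x. ln (1 - x))) =
          (\<Sum>m\<in>{1..<j}. E_beta (dlt P n m) (mu P n m) (\<lambda>x. ln (1 - x))) + (if i < j then Lm else 0)"
      proof (cases "i < j")
        case True
        then show ?thesis
          by (subst sum_upd[where i=i]) (use i1 True in \<open>auto simp: Pd_def Lm_def x0_def y0_def\<close>)
      next
        case False
        then show ?thesis by (auto simp: Pd_def intro!: sum.cong)
      qed
      show ?thesis unfolding Elog_eta_def s
        by (auto simp: Pd_def Lb_def x0_def y0_def)
    qed
    have ej: "Ejoint M (Pd x y) n k t zs = Ejoint M P n k t zs + \<delta> k t zs" for k t zs
      unfolding Ejoint_def eta \<delta>_def by (simp add: Pd_def Elog_pi_def Elog_omega_def)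
    have ej2: "Ejoint M (Pd x y) n' k t zs = Ejoint M P n' k t zs" if "n' \<noteq> n" for n' k t zs
      using that unfolding Ejoint_def Elog_eta_def Elog_pi_def Elog_omega_def by (simp add: Pd_def)
    have cD: "cD M P0 (Pd x y) = cD M P0 P + (1 / real (nK M)) * (\<Sum>k\<in>{1..nK M}. \<Sum>t\<le>T M k.
      nu_t M P0 k t * (\<Sum>zs\<in>H t. cond_t M P0 n k t zs * \<delta> k t zs))"
      unfolding H_def by (rule D_change[OF wf n]) (auto simp: ej ej2)
    have split: "(\<Sum>zs\<in>H t. cond_t M P0 n k t zs * \<delta> k t zs) =
       Lb * (\<Sum>zs\<in>{zs\<in>H t. zs ! 0 = i}. cond_t M P0 n k t zs) +
       Lm * (\<Sum>m\<in>{i+1..nZ M n}. \<Sum>zs\<in>{zs\<in>H t. zs ! 0 = m}. cond_t M P0 n k t zs)" for k t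
    proof -
      have fin: "finite (H t)" unfolding H_def by (rule hists_finite)
      have a: "(\<Sum>zs\<in>{zs\<in>H t. zs ! 0 = i}. cond_t M P0 n k t zs) = (\<Sum>zs\<in>H t. if zs ! 0 = i then cond_t M P0 n k t zs else 0)"
        using fin by (simp add: sum.inter_filter)
      have b: "(\<Sum>m\<in>{i+1..nZ M n}. \<Sum>zs\<in>{zs\<in>H t. zs ! 0 = m}. cond_t M P0 n k t zs) =
          (\<Sum>zs\<in>H t. if i < zs ! 0 then cond_t M P0 n k t zs else 0)"
      proof -
        have "(\<Sum>m\<in>{i+1..nZ M n}. \<Sum>zs\<in>{zs\<in>H t. zs ! 0 = m}. cond_t M P0 n k t zs) =
          (\<Sum>zs\<in>H t. if zs ! 0 \<in> {i+1..nZ M n} then cond_t M P0 n k t zs else 0)"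
          using fin by (rule sum_group_filter[OF finite_atLeastAtMost])
        also have "\<dots> = (\<Sum>zs\<in>H t. if i < zs ! 0 then cond_t M P0 n k t zs else 0)"
        proof (rule sum.cong)
          fix zs assume "zs \<in> H t"
          then have "zs ! 0 \<in> {1..nZ M n}" unfolding H_def using hists_nth by blast
          then show "(if zs ! 0 \<in> {i+1..nZ M n} then cond_t M P0 n k t zs else 0) = (if i < zs ! 0 then cond_t M P0 n k t zs else 0)"
            by auto
        qed simp
        finally show ?thesis .
      qed
      have "(\<Sum>zs\<in>H t. cond_t M P0 n k t zs * \<delta> k t zs) =
         (\<Sum>zs\<in>H t. Lb * (if zs ! 0 = i then cond_t M P0 n k t zs else 0) + Lm * (if i < zs ! 0 then cond_t M P0 n k t zs else 0))"
        by (rule sum.cong) (auto simp: \<delta>_def algebra_simps)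
      also have "\<dots> = Lb * (\<Sum>zs\<in>H t. if zs ! 0 = i then cond_t M P0 n k t zs else 0) + Lm * (\<Sum>zs\<in>H t. if i < zs ! 0 then cond_t M P0 n k t zs else 0)"
        by (simp add: sum.distrib sum_distrib_left)
      finally show ?thesis unfolding a b .
    qed
    have qa: "nu_t M P0 k t * (\<Sum>zs\<in>{zs\<in>H t. zs ! 0 = i}. cond_t M P0 n k t zs) = qm1 M P0 n k t 0 i" for k t
      unfolding qm1_def H_def cond_t_def ..
    have qb: "nu_t M P0 k t * (\<Sum>m\<in>{i+1..nZ M n}. \<Sum>zs\<in>{zs\<in>H t. zs ! 0 = m}. cond_t M P0 n k t zs)
        = (\<Sum>m\<in>{i+1..nZ M n}. qm1 M P0 n k t 0 m)" for k t
      unfolding qm1_def H_def cond_t_def by (simp add: sum_distrib_left)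
    have Dval: "(1 / real (nK M)) * (\<Sum>k\<in>{1..nK M}. \<Sum>t\<le>T M k.
      nu_t M P0 k t * (\<Sum>zs\<in>H t. cond_t M P0 n k t zs * \<delta> k t zs)) = (A - 1) * Lb + (B - g / h) * Lm"
    proof -
      have "(1 / real (nK M)) * (\<Sum>k\<in>{1..nK M}. \<Sum>t\<le>T M k.
          nu_t M P0 k t * (\<Sum>zs\<in>H t. cond_t M P0 n k t zs * \<delta> k t zs))
        = (1 / real (nK M)) * (\<Sum>k\<in>{1..nK M}. \<Sum>t\<le>T M k. Lb * qm1 M P0 n k t 0 i + Lm * (\<Sum>m\<in>{i+1..nZ M n}. qm1 M P0 n k t 0 m))"
        unfolding split qa[symmetric] qb[symmetric] by (simp add: algebra_simps)
      also have "\<dots> = Lb * (\<Sum>k\<in>{1..nK M}. 1 / real (nK M) * (\<Sum>t\<le>T M k. qm1 M P0 n k t 0 i))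
          + Lm * (\<Sum>k\<in>{1..nK M}. 1 / real (nK M) * (\<Sum>t\<le>T M k. \<Sum>m\<in>{i+1..nZ M n}. qm1 M P0 n k t 0 m))"
        by (simp add: sum.distrib sum_distrib_left algebra_simps)
      also have "\<dots> = (A - 1) * Lb + (B - g / h) * Lm"
        unfolding A_def B_def upd_dlt_def upd_mu_def g_def h_def by simp
      finally show ?thesis .
    qed
    have cS1: "cS1 M (Pd x y) = cS1 M P + (E_stick_prior x y g h - E_stick_prior x0 y0 g h)"
    proof -
      define G where "G n' = (\<Sum>i'\<in>{1..nZ M n'}. E_stick_prior (dlt (Pd x y) n' i') (mu (Pd x y) n' i') (gg (Pd x y) n') (hh (Pd x y) n'))" for n'
      define G0 where "G0 n' = (\<Sum>i'\<in>{1..nZ M n'}. E_stick_prior (dlt P n' i') (mu P n' i') (gg P n') (hh P n'))" for n'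
      have inner: "G n = G0 n + (E_stick_prior x y g h - E_stick_prior x0 y0 g h)"
        unfolding G_def G0_def
        by (rule sum_upd'[where i=i]) (use i in \<open>auto simp: Pd_def g_def h_def x0_def y0_def\<close>)
      have "sum G {1..nAg M} = sum G0 {1..nAg M} + (G n - G0 n)"
        by (rule sum_upd[where i=n]) (use n in \<open>auto simp: G_def G0_def Pd_def\<close>)
      then show ?thesis unfolding cS1_def G_def[symmetric] G0_def[symmetric] using inner by simp
    qed
    have cH1: "cH1 M (Pd x y) = cH1 M P + (E_beta x y (\<lambda>v. ln (beta_pdf x y v)) - E_beta x0 y0 (\<lambda>v. ln (beta_pdf x0 y0 v)))"
    proof -
      define G where "G n' = (\<Sum>i'\<in>{1..nZ M n'}. E_beta (dlt (Pd x y) n' i') (mu (Pd x y) n' i') (\<lambda>v. ln (beta_pdf (dlt (Pd x y) n' i') (mu (Pd x y) n' i') v)))" for n'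
      define G0 where "G0 n' = (\<Sum>i'\<in>{1..nZ M n'}. E_beta (dlt P n' i') (mu P n' i') (\<lambda>v. ln (beta_pdf (dlt P n' i') (mu P n' i') v)))" for n'
      have inner: "G n = G0 n + (E_beta x y (\<lambda>v. ln (beta_pdf x y v)) - E_beta x0 y0 (\<lambda>v. ln (beta_pdf x0 y0 v)))"
        unfolding G_def G0_def
        by (rule sum_upd'[where i=i]) (use i in \<open>auto simp: Pd_def x0_def y0_def\<close>)
      have "sum G {1..nAg M} = sum G0 {1..nAg M} + (G n - G0 n)"
        by (rule sum_upd[where i=n]) (use n in \<open>auto simp: G_def G0_def Pd_def\<close>)
      then show ?thesis unfolding cH1_def G_def[symmetric] G0_def[symmetric] using inner by simp
    qed
    have same: "cS2 M (Pd x y) = cS2 M P" "cPi M (Pd x y) = cPi M P" "cG1 M (Pd x y) = cG1 M P"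
      "cG2 M (Pd x y) = cG2 M P" "cH2 M (Pd x y) = cH2 M P" "cH3 M (Pd x y) = cH3 M P"
      "cH4 M (Pd x y) = cH4 M P" "cH5 M (Pd x y) = cH5 M P"
      by (simp_all add: Pd_def cS2_def cPi_def cG1_def cG2_def cH2_def cH3_def cH4_def cH5_def)
    show ?thesis
      unfolding ELBO_split[of M P0 "Pd x y"] ELBO_split[of M P0 P] same cS1 cH1 cD Dval
      unfolding F_def Lb_def Lm_def by (simp add: algebra_simps)
  qed
  have qm1p: "\<And>k t \<tau> j. k \<in> {1..nK M} \<Longrightarrow> t \<le> T M k \<Longrightarrow> qm1 M P0 n k t \<tau> j \<ge> 0"
    using qm1_nonneg[OF wf] by blast
  have s1: "0 \<le> (\<Sum>k\<in>{1..nK M}. 1 / real (nK M) * (\<Sum>t\<le>T M k. qm1 M P0 n k t 0 i))"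
    by (intro sum_nonneg mult_nonneg_nonneg) (auto intro!: qm1p)
  have s2: "0 \<le> (\<Sum>k\<in>{1..nK M}. 1 / real (nK M) * (\<Sum>t\<le>T M k. \<Sum>m\<in>{i+1..nZ M n}. qm1 M P0 n k t 0 m))"
    by (intro sum_nonneg mult_nonneg_nonneg) (auto intro!: qm1p)
  have A1: "A \<ge> 1" unfolding A_def upd_dlt_def using s1 by simp
  have Bg: "B \<ge> g / h" unfolding B_def upd_mu_def g_def h_def using s2 by simp
  have A0: "A > 0" using A1 by simp
  have B0: "B > 0" using Bg g0 h0 by (smt (verit) divide_pos_pos)
  have Fval: "F x y = (A-1) * E_beta x y ln + (B-1) * E_beta x y (\<lambda>v. ln (1-v)) - E_beta x y (\<lambda>v. ln (beta_pdf x y v))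
     + E_gamma g h ln" if "x > 0" "y > 0" for x y
    unfolding F_def E_stick[OF that g0 h0] by (simp add: algebra_simps)
  show ?thesis unfolding is_argmax_def Pd_def[symmetric] A_def[symmetric] B_def[symmetric]
  proof (intro conjI ballI)
    show "(A, B) \<in> {(x, y). 0 < x \<and> 0 < y}" using A0 B0 by simp
  next
    fix p :: "real \<times> real" assume "p \<in> {(x, y). 0 < x \<and> 0 < y}"
    then obtain x y :: real where p: "p = (x, y)" and x: "x > 0" and y: "y > 0" by auto
    have "F x y \<le> F A B"
      unfolding Fval[OF x y] Fval[OF A0 B0] using beta_argmax[OF A0 B0 x y] by simp
    then show "(case p of (x, y) \<Rightarrow> ELBO M P0 (Pd x y)) \<le> (case (A, B) of (x, y) \<Rightarrow> ELBO M P0 (Pd x y))"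
      unfolding p by (simp add: main)
  qed
qed

lemma E_beta_ln1m_neg:
  assumes a: "a > 0" and b: "b > 0"
  shows "E_beta a b (\<lambda>v. ln (1 - v)) \<le> 0"
  unfolding E_beta_ln1m[OF a b] using Digamma_real_mono[of b "a + b"] a b by simp

lemma part4:
  assumes wf: "wf_model M" and ok: "vparams_ok M P" and n: "n \<in> {1..nAg M}"
  shows "is_argmax
        (\<lambda>(x, y). ELBO M P0 (P\<lparr>gg := (gg P)(n := x), hh := (hh P)(n := y)\<rparr>))
        {(x, y). 0 < x \<and> 0 < y}
        (upd_g M n, upd_h M P n)"
proof -
  define Pg where "Pg x y = P\<lparr>gg := (gg P)(n := x), hh := (hh P)(n := y)\<rparr>" for x y
  define g0 where "g0 = gg P n"
  define h0 where "h0 = hh P n"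
  define Z where "Z = nZ M n"
  define S where "S = (\<Sum>i\<in>{1..Z}. E_beta (dlt P n i) (mu P n i) (\<lambda>v. ln (1 - v)))"
  define A where "A = upd_g M n"
  define B where "B = upd_h M P n"
  have pos: "\<And>i. i \<in> {1..Z} \<Longrightarrow> dlt P n i > 0 \<and> mu P n i > 0"
    using ok n unfolding vparams_ok_def Z_def by auto
  have e0: "he M > 0" and f0: "hf M > 0" using wf unfolding wf_model_def by auto
  define F where "F x y = (\<Sum>i\<in>{1..Z}. E_stick_prior (dlt P n i) (mu P n i) x y)
      + E_gamma x y (\<lambda>r. ln (gamma_pdf (he M) (hf M) r)) - E_gamma x y (\<lambda>r. ln (gamma_pdf x y r))" for x y
  have main: "ELBO M P0 (Pg x y) = ELBO M P0 P - F g0 h0 + F x y" for x y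
  proof -
    have cS1: "cS1 M (Pg x y) = cS1 M P + ((\<Sum>i\<in>{1..Z}. E_stick_prior (dlt P n i) (mu P n i) x y) - (\<Sum>i\<in>{1..Z}. E_stick_prior (dlt P n i) (mu P n i) g0 h0))"
      unfolding cS1_def
      by (rule sum_upd'[where i=n]) (use n in \<open>auto simp: Pg_def Z_def g0_def h0_def\<close>)
    have cG1: "cG1 M (Pg x y) = cG1 M P + (E_gamma x y (\<lambda>r. ln (gamma_pdf (he M) (hf M) r)) - E_gamma g0 h0 (\<lambda>r. ln (gamma_pdf (he M) (hf M) r)))"
      unfolding cG1_def
      by (rule sum_upd'[where i=n]) (use n in \<open>auto simp: Pg_def g0_def h0_def\<close>)
    have cH3: "cH3 M (Pg x y) = cH3 M P + (E_gamma x y (\<lambda>r. ln (gamma_pdf x y r)) - E_gamma g0 h0 (\<lambda>r. ln (gamma_pdf g0 h0 r)))"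
      unfolding cH3_def
      by (rule sum_upd'[where i=n]) (use n in \<open>auto simp: Pg_def g0_def h0_def\<close>)
    have same: "cD M P0 (Pg x y) = cD M P0 P" "cS2 M (Pg x y) = cS2 M P" "cPi M (Pg x y) = cPi M P"
      "cG2 M (Pg x y) = cG2 M P" "cH1 M (Pg x y) = cH1 M P" "cH2 M (Pg x y) = cH2 M P"
      "cH4 M (Pg x y) = cH4 M P" "cH5 M (Pg x y) = cH5 M P"
      by (simp_all add: Pg_def cD_def Ejoint_def Elog_eta_def Elog_pi_def Elog_omega_def
          cS2_def cPi_def cG2_def cH1_def cH2_def cH4_def cH5_def)
    show ?thesis
      unfolding ELBO_split[of M P0 "Pg x y"] ELBO_split[of M P0 P] same cS1 cG1 cH3
      unfolding F_def by (simp add: algebra_simps)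
  qed
  have Sn: "S \<le> 0" unfolding S_def
    by (intro sum_nonpos E_beta_ln1m_neg) (use pos in auto)
  have Bv: "B = hf M - S" unfolding B_def upd_h_def S_def Z_def
    by (simp add: E_beta_ln1m pos[unfolded Z_def] sum_subtractf)
  have A0: "A > 0" unfolding A_def upd_g_def using e0 by simp
  have B0: "B > 0" using Bv Sn f0 by simp
  have Fval: "F x y = (A-1) * E_gamma x y ln - B * E_gamma x y (\<lambda>r. r) - E_gamma x y (\<lambda>r. ln (gamma_pdf x y r))
     + (he M * ln (hf M) - ln (Gamma (he M)) - S)" if x: "x > 0" and y: "y > 0" for x y
  proof -
    have "(\<Sum>i\<in>{1..Z}. E_stick_prior (dlt P n i) (mu P n i) x y) =
        (\<Sum>i\<in>{1..Z}. E_gamma x y ln + (E_gamma x y (\<lambda>r. r) - 1) * E_beta (dlt P n i) (mu P n i) (\<lambda>v. ln (1 - v)))"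
      by (rule sum.cong) (use pos x y in \<open>auto simp: E_stick gamma_id(2)\<close>)
    also have "\<dots> = real Z * E_gamma x y ln + (E_gamma x y (\<lambda>r. r) - 1) * S"
      unfolding S_def by (simp add: sum.distrib sum_distrib_left)
    finally have st: "(\<Sum>i\<in>{1..Z}. E_stick_prior (dlt P n i) (mu P n i) x y) = real Z * E_gamma x y ln + (E_gamma x y (\<lambda>r. r) - 1) * S" .
    have Av: "A = he M + real Z" by (simp add: A_def upd_g_def Z_def)
    show ?thesis unfolding F_def st gamma_ln_pdf(2)[OF x y e0 f0] Bv Av
      by (simp add: algebra_simps)
  qed
  show ?thesis unfolding is_argmax_def Pg_def[symmetric] A_def[symmetric] B_def[symmetric]
  proof (intro conjI ballI)
    show "(A, B) \<in> {(x, y). 0 < x \<and> 0 < y}" using A0 B0 by simp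
  next
    fix p :: "real \<times> real" assume "p \<in> {(x, y). 0 < x \<and> 0 < y}"
    then obtain x y :: real where p: "p = (x, y)" and x: "x > 0" and y: "y > 0" by auto
    have "F x y \<le> F A B"
      unfolding Fval[OF x y] Fval[OF A0 B0] using gamma_argmax[OF A0 B0 x y] by simp
    then show "(case p of (x, y) \<Rightarrow> ELBO M P0 (Pg x y)) \<le> (case (A, B) of (x, y) \<Rightarrow> ELBO M P0 (Pg x y))"
      unfolding p by (simp add: main)
  qed
qed

lemma part5:
  assumes wf: "wf_model M" and ok: "vparams_ok M P" and n: "n \<in> {1..nAg M}"
    and a: "a < nA M n" and ob: "ob < nO M n" and i: "i \<in> {1..nZ M n}"
  shows "is_argmax
        (\<lambda>(x, y). ELBO M P0 (P\<lparr>aa := (aa P)(n := (aa P n)(a := (aa P n a)(ob := (aa P n a ob)(i := x)))),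
                                bb := (bb P)(n := (bb P n)(a := (bb P n a)(ob := (bb P n a ob)(i := y))))\<rparr>))
        {(x, y). 0 < x \<and> 0 < y}
        (upd_a M n a ob, upd_b M P n a ob i)"
proof -
  define Pg where "Pg x y = P\<lparr>aa := (aa P)(n := (aa P n)(a := (aa P n a)(ob := (aa P n a ob)(i := x)))),
                                bb := (bb P)(n := (bb P n)(a := (bb P n a)(ob := (bb P n a ob)(i := y))))\<rparr>" for x y
  define g0 where "g0 = aa P n a ob i"
  define h0 where "h0 = bb P n a ob i"
  define Z where "Z = nZ M n"
  define S where "S = (\<Sum>j\<in>{1..Z}. E_beta (sgm P n a ob i j) (lam P n a ob i j) (\<lambda>v. ln (1 - v)))"
  define A where "A = upd_a M n a ob"
  define B where "B = upd_b M P n a ob i"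
  define c where "c = hc M n a ob"
  define d where "d = hd M n a ob"
  have pos: "\<And>j. j \<in> {1..Z} \<Longrightarrow> sgm P n a ob i j > 0 \<and> lam P n a ob i j > 0"
    using ok n a ob i unfolding vparams_ok_def Z_def by auto
  have e0: "c > 0" and f0: "d > 0" using wf n a ob unfolding wf_model_def c_def d_def by auto
  define F where "F x y = (\<Sum>j\<in>{1..Z}. E_stick_prior (sgm P n a ob i j) (lam P n a ob i j) x y)
      + E_gamma x y (\<lambda>r. ln (gamma_pdf c d r)) - E_gamma x y (\<lambda>r. ln (gamma_pdf x y r))" for x y
  have main: "ELBO M P0 (Pg x y) = ELBO M P0 P - F g0 h0 + F x y" for x y
  proof -
    have cS2: "cS2 M (Pg x y) = cS2 M P + ((\<Sum>j\<in>{1..Z}. E_stick_prior (sgm P n a ob i j) (lam P n a ob i j) x y) - (\<Sum>j\<in>{1..Z}. E_stick_prior (sgm P n a ob i j) (lam P n a ob i j) g0 h0))"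
      unfolding cS2_def
      apply (rule sum_upd'[where i=n])
         apply simp
        apply (use n in simp)
       apply (simp add: Pg_def)
      apply (rule sum_upd'[where i=a])
         apply simp
        apply (use a in simp)
       apply (simp add: Pg_def)
      apply (rule sum_upd'[where i=ob])
         apply simp
        apply (use ob in simp)
       apply (simp add: Pg_def)
      apply (rule sum_upd'[where i=i])
         apply simp
        apply (use i in simp)
       apply (simp add: Pg_def)
      apply (simp add: Pg_def Z_def g0_def h0_def)
      done
    have cG2: "cG2 M (Pg x y) = cG2 M P + (E_gamma x y (\<lambda>r. ln (gamma_pdf c d r)) - E_gamma g0 h0 (\<lambda>r. ln (gamma_pdf c d r)))"
      unfolding cG2_def
      apply (rule sum_upd'[where i=n])
         apply simp
        apply (use n in simp)
       apply (simp add: Pg_def)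
      apply (rule sum_upd'[where i=a])
         apply simp
        apply (use a in simp)
       apply (simp add: Pg_def)
      apply (rule sum_upd'[where i=ob])
         apply simp
        apply (use ob in simp)
       apply (simp add: Pg_def)
      apply (rule sum_upd'[where i=i])
         apply simp
        apply (use i in simp)
       apply (simp add: Pg_def)
      apply (simp add: Pg_def c_def d_def g0_def h0_def)
      done
    have cH4: "cH4 M (Pg x y) = cH4 M P + (E_gamma x y (\<lambda>r. ln (gamma_pdf x y r)) - E_gamma g0 h0 (\<lambda>r. ln (gamma_pdf g0 h0 r)))"
      unfolding cH4_def
      apply (rule sum_upd'[where i=n])
         apply simp
        apply (use n in simp)
       apply (simp add: Pg_def)
      apply (rule sum_upd'[where i=a])
         apply simp
        apply (use a in simp)
       apply (simp add: Pg_def)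
      apply (rule sum_upd'[where i=ob])
         apply simp
        apply (use ob in simp)
       apply (simp add: Pg_def)
      apply (rule sum_upd'[where i=i])
         apply simp
        apply (use i in simp)
       apply (simp add: Pg_def)
      apply (simp add: Pg_def g0_def h0_def)
      done
    have same: "cD M P0 (Pg x y) = cD M P0 P" "cS1 M (Pg x y) = cS1 M P" "cPi M (Pg x y) = cPi M P"
      "cG1 M (Pg x y) = cG1 M P" "cH1 M (Pg x y) = cH1 M P" "cH2 M (Pg x y) = cH2 M P"
      "cH3 M (Pg x y) = cH3 M P" "cH5 M (Pg x y) = cH5 M P"
      by (simp_all add: Pg_def cD_def Ejoint_def Elog_eta_def Elog_pi_def Elog_omega_def
          cS1_def cPi_def cG1_def cH1_def cH2_def cH3_def cH5_def)
    show ?thesis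
      unfolding ELBO_split[of M P0 "Pg x y"] ELBO_split[of M P0 P] same cS2 cG2 cH4
      unfolding F_def by (simp add: algebra_simps)
  qed
  have Sn: "S \<le> 0" unfolding S_def
    by (intro sum_nonpos E_beta_ln1m_neg) (use pos in auto)
  have Bv: "B = d - S" unfolding B_def upd_b_def S_def Z_def d_def
    by (simp add: E_beta_ln1m pos[unfolded Z_def] sum_subtractf)
  have A0: "A > 0" unfolding A_def upd_a_def using e0 c_def by simp
  have B0: "B > 0" using Bv Sn f0 by simp
  have Fval: "F x y = (A-1) * E_gamma x y ln - B * E_gamma x y (\<lambda>r. r) - E_gamma x y (\<lambda>r. ln (gamma_pdf x y r))
     + (c * ln d - ln (Gamma c) - S)" if x: "x > 0" and y: "y > 0" for x y
  proof -
    have "(\<Sum>j\<in>{1..Z}. E_stick_prior (sgm P n a ob i j) (lam P n a ob i j) x y) =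
        (\<Sum>j\<in>{1..Z}. E_gamma x y ln + (E_gamma x y (\<lambda>r. r) - 1) * E_beta (sgm P n a ob i j) (lam P n a ob i j) (\<lambda>v. ln (1 - v)))"
      by (rule sum.cong) (use pos x y in \<open>auto simp: E_stick gamma_id(2)\<close>)
    also have "\<dots> = real Z * E_gamma x y ln + (E_gamma x y (\<lambda>r. r) - 1) * S"
      unfolding S_def by (simp add: sum.distrib sum_distrib_left)
    finally have st: "(\<Sum>j\<in>{1..Z}. E_stick_prior (sgm P n a ob i j) (lam P n a ob i j) x y) = real Z * E_gamma x y ln + (E_gamma x y (\<lambda>r. r) - 1) * S" .
    have Av: "A = c + real Z" by (simp add: A_def upd_a_def Z_def c_def)
    show ?thesis unfolding F_def st gamma_ln_pdf(2)[OF x y e0 f0] Bv Av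
      by (simp add: algebra_simps)
  qed
  show ?thesis unfolding is_argmax_def Pg_def[symmetric] A_def[symmetric] B_def[symmetric]
  proof (intro conjI ballI)
    show "(A, B) \<in> {(x, y). 0 < x \<and> 0 < y}" using A0 B0 by simp
  next
    fix p :: "real \<times> real" assume "p \<in> {(x, y). 0 < x \<and> 0 < y}"
    then obtain x y :: real where p: "p = (x, y)" and x: "x > 0" and y: "y > 0" by auto
    have "F x y \<le> F A B"
      unfolding Fval[OF x y] Fval[OF A0 B0] using gamma_argmax[OF A0 B0 x y] by simp
    then show "(case p of (x, y) \<Rightarrow> ELBO M P0 (Pg x y)) \<le> (case (A, B) of (x, y) \<Rightarrow> ELBO M P0 (Pg x y))"
      unfolding p by (simp add: main)
  qed
qed

lemma sum_swap4:
  "(\<Sum>b\<in>B. \<Sum>k\<in>KK. \<Sum>t\<in>TT k. \<Sum>\<tau>\<in>UU t. X b k t \<tau>) = (\<Sum>k\<in>KK. \<Sum>t\<in>TT k. \<Sum>\<tau>\<in>UU t. \<Sum>b\<in>B. X b k t \<tau>)"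
proof -
  have "(\<Sum>b\<in>B. \<Sum>k\<in>KK. \<Sum>t\<in>TT k. \<Sum>\<tau>\<in>UU t. X b k t \<tau>) = (\<Sum>k\<in>KK. \<Sum>b\<in>B. \<Sum>t\<in>TT k. \<Sum>\<tau>\<in>UU t. X b k t \<tau>)"
    by (rule sum.swap)
  also have "\<dots> = (\<Sum>k\<in>KK. \<Sum>t\<in>TT k. \<Sum>b\<in>B. \<Sum>\<tau>\<in>UU t. X b k t \<tau>)"
    by (rule sum.cong[OF refl], rule sum.swap)
  also have "\<dots> = (\<Sum>k\<in>KK. \<Sum>t\<in>TT k. \<Sum>\<tau>\<in>UU t. \<Sum>b\<in>B. X b k t \<tau>)"
    by (rule sum.cong[OF refl], rule sum.cong[OF refl], rule sum.swap)
  finally show ?thesis .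
qed

lemma part2:
  assumes wf: "wf_model M" and ok: "vparams_ok M P" and n: "n \<in> {1..nAg M}" and i: "i \<in> {1..nZ M n}"
  shows "is_argmax
        (\<lambda>x. ELBO M P0 (P\<lparr>phi := (phi P)(n := (phi P n)(i := x))\<rparr>))
        (PiE {..<nA M n} (\<lambda>_. {0<..}))
        (upd_phi M P0 n i)"
proof -
  define Pp where "Pp x = P\<lparr>phi := (phi P)(n := (phi P n)(i := x))\<rparr>" for x
  define Mn where "Mn = nA M n"
  define ph0 where "ph0 = phi P n i"
  define th where "th = theta M n i"
  define U where "U = upd_phi M P0 n i"
  define W where "W b = (\<Sum>k\<in>{1..nK M}. (1 / real (nK M)) * (\<Sum>t\<le>T M k. \<Sum>\<tau>\<le>t.
        qm1 M P0 n k t \<tau> i * (if act M k n \<tau> = b then 1 else 0)))" for b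
  define H where "H = hists (nZ M n)"
  have Mn1: "Mn \<ge> 1" using wf n unfolding wf_model_def Mn_def by auto
  have th0: "\<forall>b<Mn. th b > 0" using wf n i unfolding wf_model_def Mn_def th_def by auto
  have ph00: "\<forall>b<Mn. ph0 b > 0" using ok n i unfolding vparams_ok_def Mn_def ph0_def by auto
  have actlt: "act M k n \<tau> < Mn" if "k \<in> {1..nK M}" "\<tau> \<le> T M k" for k \<tau>
    using wf that n unfolding wf_model_def Mn_def by auto
  define F where "F x = (\<Sum>b<Mn. W b * E_dir x Mn (\<lambda>p. ln (p b)))
      + E_dir x Mn (\<lambda>p. ln (dir_dens th Mn p)) - E_dir x Mn (\<lambda>p. ln (dir_dens x Mn p))" for x
  have main: "ELBO M P0 (Pp x) = ELBO M P0 P - F ph0 + F x" for x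
  proof -
    define Ld where "Ld b = E_dir x Mn (\<lambda>p. ln (p b)) - E_dir ph0 Mn (\<lambda>p. ln (p b))" for b
    define \<delta> where "\<delta> = (\<lambda>k t zs. \<Sum>\<tau>\<le>t. if zs ! \<tau> = i then Ld (act M k n \<tau>) else 0)"
    have pi: "Elog_pi M (Pp x) n i' b = Elog_pi M P n i' b + (if i' = i then Ld b else 0)" for i' b
      unfolding Elog_pi_def Ld_def by (simp add: Pp_def Mn_def ph0_def)
    have ej: "Ejoint M (Pp x) n k t zs = Ejoint M P n k t zs + \<delta> k t zs" for k t zs
      unfolding Ejoint_def pi \<delta>_def
      by (simp add: Pp_def Elog_eta_def Elog_omega_def sum.distrib)
    have ej2: "Ejoint M (Pp x) n' k t zs = Ejoint M P n' k t zs" if "n' \<noteq> n" for n' k t zs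
      using that unfolding Ejoint_def Elog_eta_def Elog_pi_def Elog_omega_def by (simp add: Pp_def)
    have cD: "cD M P0 (Pp x) = cD M P0 P + (1 / real (nK M)) * (\<Sum>k\<in>{1..nK M}. \<Sum>t\<le>T M k.
      nu_t M P0 k t * (\<Sum>zs\<in>H t. cond_t M P0 n k t zs * \<delta> k t zs))"
      unfolding H_def by (rule D_change[OF wf n]) (auto simp: ej ej2)
    have step1: "nu_t M P0 k t * (\<Sum>zs\<in>H t. cond_t M P0 n k t zs * \<delta> k t zs) =
        (\<Sum>\<tau>\<le>t. qm1 M P0 n k t \<tau> i * Ld (act M k n \<tau>))" for k t
    proof -
      have fin: "finite (H t)" unfolding H_def by (rule hists_finite)
      have "(\<Sum>zs\<in>H t. cond_t M P0 n k t zs * \<delta> k t zs) =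
          (\<Sum>zs\<in>H t. \<Sum>\<tau>\<le>t. if zs ! \<tau> = i then cond_t M P0 n k t zs * Ld (act M k n \<tau>) else 0)"
        unfolding \<delta>_def by (simp add: sum_distrib_left if_distrib cong: if_cong)
      also have "\<dots> = (\<Sum>\<tau>\<le>t. \<Sum>zs\<in>H t. if zs ! \<tau> = i then cond_t M P0 n k t zs * Ld (act M k n \<tau>) else 0)"
        by (rule sum.swap)
      also have "\<dots> = (\<Sum>\<tau>\<le>t. (\<Sum>zs\<in>{zs\<in>H t. zs ! \<tau> = i}. cond_t M P0 n k t zs) * Ld (act M k n \<tau>))"
      proof (rule sum.cong[OF refl])
        fix \<tau>
        show "(\<Sum>zs\<in>H t. if zs ! \<tau> = i then cond_t M P0 n k t zs * Ld (act M k n \<tau>) else 0) =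
          (\<Sum>zs\<in>{zs\<in>H t. zs ! \<tau> = i}. cond_t M P0 n k t zs) * Ld (act M k n \<tau>)"
          by (subst sum_distrib_right) (rule sum.inter_filter[OF fin, symmetric])
      qed
      finally have eq: "(\<Sum>zs\<in>H t. cond_t M P0 n k t zs * \<delta> k t zs) =
          (\<Sum>\<tau>\<le>t. (\<Sum>zs\<in>{zs\<in>H t. zs ! \<tau> = i}. cond_t M P0 n k t zs) * Ld (act M k n \<tau>))" .
      have "nu_t M P0 k t * (\<Sum>zs\<in>H t. cond_t M P0 n k t zs * \<delta> k t zs) =
          (\<Sum>\<tau>\<le>t. (nu_t M P0 k t * (\<Sum>zs\<in>{zs\<in>H t. zs ! \<tau> = i}. cond_t M P0 n k t zs)) * Ld (act M k n \<tau>))"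
        unfolding eq by (subst sum_distrib_left) (simp only: mult.assoc)
      also have "\<dots> = (\<Sum>\<tau>\<le>t. qm1 M P0 n k t \<tau> i * Ld (act M k n \<tau>))"
        by (simp only: qm1_def H_def)
      finally show ?thesis .
    qed
    have step2: "Ld (act M k n \<tau>) = (\<Sum>b<Mn. Ld b * (if act M k n \<tau> = b then 1 else 0))"
      if "k \<in> {1..nK M}" "\<tau> \<le> T M k" for k \<tau>
      using actlt[OF that] by (simp add: if_distrib cong: if_cong)
    have Dval: "(1 / real (nK M)) * (\<Sum>k\<in>{1..nK M}. \<Sum>t\<le>T M k.
      nu_t M P0 k t * (\<Sum>zs\<in>H t. cond_t M P0 n k t zs * \<delta> k t zs)) = (\<Sum>b<Mn. W b * Ld b)"
    proof -
      have e1: "nu_t M P0 k t * (\<Sum>zs\<in>H t. cond_t M P0 n k t zs * \<delta> k t zs) =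
          (\<Sum>\<tau>\<le>t. \<Sum>b<Mn. qm1 M P0 n k t \<tau> i * (Ld b * (if act M k n \<tau> = b then 1 else 0)))"
        if k: "k \<in> {1..nK M}" and t: "t \<le> T M k" for k t
        unfolding step1
      proof (rule sum.cong[OF refl])
        fix \<tau> assume "\<tau> \<in> {..t}"
        then have "\<tau> \<le> T M k" using t by simp
        then show "qm1 M P0 n k t \<tau> i * Ld (act M k n \<tau>) = (\<Sum>b<Mn. qm1 M P0 n k t \<tau> i * (Ld b * (if act M k n \<tau> = b then 1 else 0)))"
          by (subst step2[OF k]) (simp_all add: sum_distrib_left)
      qed
      have "(1 / real (nK M)) * (\<Sum>k\<in>{1..nK M}. \<Sum>t\<le>T M k.
          nu_t M P0 k t * (\<Sum>zs\<in>H t. cond_t M P0 n k t zs * \<delta> k t zs))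
        = (1 / real (nK M)) * (\<Sum>k\<in>{1..nK M}. \<Sum>t\<le>T M k. \<Sum>\<tau>\<le>t. \<Sum>b<Mn. qm1 M P0 n k t \<tau> i * (Ld b * (if act M k n \<tau> = b then 1 else 0)))"
        by (intro arg_cong2[where f="(*)"] refl sum.cong e1) auto
      also have "\<dots> = (\<Sum>k\<in>{1..nK M}. \<Sum>t\<le>T M k. \<Sum>\<tau>\<le>t. \<Sum>b<Mn. (1 / real (nK M)) * qm1 M P0 n k t \<tau> i * (Ld b * (if act M k n \<tau> = b then 1 else 0)))"
        by (simp only: sum_distrib_left mult.assoc)
      also have "\<dots> = (\<Sum>b<Mn. \<Sum>k\<in>{1..nK M}. \<Sum>t\<le>T M k. \<Sum>\<tau>\<le>t. (1 / real (nK M)) * qm1 M P0 n k t \<tau> i * (Ld b * (if act M k n \<tau> = b then 1 else 0)))"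
        by (rule sum_swap4[symmetric])
      also have "\<dots> = (\<Sum>b<Mn. W b * Ld b)"
        unfolding W_def by (intro sum.cong refl) (simp add: sum_distrib_left sum_distrib_right algebra_simps)
      finally show ?thesis .
    qed
    have cPi: "cPi M (Pp x) = cPi M P + (E_dir x Mn (\<lambda>p. ln (dir_dens th Mn p)) - E_dir ph0 Mn (\<lambda>p. ln (dir_dens th Mn p)))"
      unfolding cPi_def
      apply (rule sum_upd'[where i=n])
         apply simp
        apply (use n in simp)
       apply (simp add: Pp_def)
      apply (rule sum_upd'[where i=i])
         apply simp
        apply (use i in simp)
       apply (simp add: Pp_def)
      apply (simp add: Pp_def Mn_def ph0_def th_def)
      done
    have cH5: "cH5 M (Pp x) = cH5 M P + (E_dir x Mn (\<lambda>p. ln (dir_dens x Mn p)) - E_dir ph0 Mn (\<lambda>p. ln (dir_dens ph0 Mn p)))"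
      unfolding cH5_def
      apply (rule sum_upd'[where i=n])
         apply simp
        apply (use n in simp)
       apply (simp add: Pp_def)
      apply (rule sum_upd'[where i=i])
         apply simp
        apply (use i in simp)
       apply (simp add: Pp_def)
      apply (simp add: Pp_def Mn_def ph0_def)
      done
    have same: "cS1 M (Pp x) = cS1 M P" "cS2 M (Pp x) = cS2 M P" "cG1 M (Pp x) = cG1 M P"
      "cG2 M (Pp x) = cG2 M P" "cH1 M (Pp x) = cH1 M P" "cH2 M (Pp x) = cH2 M P"
      "cH3 M (Pp x) = cH3 M P" "cH4 M (Pp x) = cH4 M P"
      by (simp_all add: Pp_def cS1_def cS2_def cG1_def cG2_def cH1_def cH2_def cH3_def cH4_def)
    have "ELBO M P0 (Pp x) = ELBO M P0 P + (\<Sum>b<Mn. W b * Ld b)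
       + (E_dir x Mn (\<lambda>p. ln (dir_dens th Mn p)) - E_dir ph0 Mn (\<lambda>p. ln (dir_dens th Mn p)))
       - (E_dir x Mn (\<lambda>p. ln (dir_dens x Mn p)) - E_dir ph0 Mn (\<lambda>p. ln (dir_dens ph0 Mn p)))"
      unfolding ELBO_split[of M P0 "Pp x"] ELBO_split[of M P0 P] same cPi cH5 cD Dval
      by (simp add: algebra_simps)
    moreover have "(\<Sum>b<Mn. W b * Ld b) = (\<Sum>b<Mn. W b * E_dir x Mn (\<lambda>p. ln (p b))) - (\<Sum>b<Mn. W b * E_dir ph0 Mn (\<lambda>p. ln (p b)))"
      unfolding Ld_def by (simp add: algebra_simps sum_subtractf)
    ultimately show ?thesis unfolding F_def by simp
  qed
  have Wn: "W b \<ge> 0" for b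
    unfolding W_def using qm1_nonneg[OF wf]
    by (intro sum_nonneg mult_nonneg_nonneg) auto
  have Uv: "U b = th b + W b" if "b < Mn" for b
    using that unfolding U_def upd_phi_def W_def th_def Mn_def by simp
  have U0: "\<forall>b<Mn. U b > 0" using Uv th0 Wn by (simp add: add_pos_nonneg)
  have UPi: "U \<in> PiE {..<Mn} (\<lambda>_. {0<..})"
    using U0 unfolding U_def upd_phi_def Mn_def by auto
  have Fval: "F x = (\<Sum>b<Mn. (U b - 1) * E_dir x Mn (\<lambda>p. ln (p b))) - E_dir x Mn (\<lambda>p. ln (dir_dens x Mn p)) + ln (Cd th Mn)"
    if x: "\<forall>b<Mn. x b > 0" for x
  proof -
    have "(\<Sum>b<Mn. W b * E_dir x Mn (\<lambda>p. ln (p b))) + (\<Sum>b<Mn. (th b - 1) * E_dir x Mn (\<lambda>p. ln (p b)))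
       = (\<Sum>b<Mn. (U b - 1) * E_dir x Mn (\<lambda>p. ln (p b)))"
      by (subst sum.distrib[symmetric]) (intro sum.cong refl, simp add: Uv algebra_simps)
    then show ?thesis unfolding F_def dd_ln(2)[OF x th0 Mn1] by (simp add: algebra_simps)
  qed
  show ?thesis unfolding is_argmax_def Pp_def[symmetric] U_def[symmetric] Mn_def[symmetric]
  proof (intro conjI ballI)
    show "U \<in> PiE {..<Mn} (\<lambda>_. {0<..})" by (rule UPi)
  next
    fix x :: "nat \<Rightarrow> real" assume "x \<in> PiE {..<Mn} (\<lambda>_. {0<..})"
    then have x: "\<forall>b<Mn. x b > 0" by auto
    have "F x \<le> F U"
      unfolding Fval[OF x] Fval[OF U0] using dir_argmax[OF U0 x Mn1] by simp
    then show "ELBO M P0 (Pp x) \<le> ELBO M P0 (Pp U)" by (simp add: main)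
  qed
qed

lemma part3:
  assumes wf: "wf_model M" and ok: "vparams_ok M P" and n: "n \<in> {1..nAg M}"
    and a: "a < nA M n" and ob: "ob < nO M n" and i: "i \<in> {1..nZ M n}" and j: "j \<in> {1..nZ M n}"
  shows "is_argmax
        (\<lambda>(x, y). ELBO M P0 (P\<lparr>sgm := (sgm P)(n := (sgm P n)(a := (sgm P n a)(ob := (sgm P n a ob)(i := (sgm P n a ob i)(j := x))))),
                                lam := (lam P)(n := (lam P n)(a := (lam P n a)(ob := (lam P n a ob)(i := (lam P n a ob i)(j := y)))))\<rparr>))
        {(x, y). 0 < x \<and> 0 < y}
        (upd_sgm M P0 n a ob i j, upd_lam M P0 P n a ob i j)"
proof -
  define Ps where "Ps x y = P\<lparr>sgm := (sgm P)(n := (sgm P n)(a := (sgm P n a)(ob := (sgm P n a ob)(i := (sgm P n a ob i)(j := x))))),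
                                lam := (lam P)(n := (lam P n)(a := (lam P n a)(ob := (lam P n a ob)(i := (lam P n a ob i)(j := y)))))\<rparr>" for x y
  define g where "g = aa P n a ob i"
  define h where "h = bb P n a ob i"
  define x0 where "x0 = sgm P n a ob i j"
  define y0 where "y0 = lam P n a ob i j"
  define A where "A = upd_sgm M P0 n a ob i j"
  define B where "B = upd_lam M P0 P n a ob i j"
  define H where "H = hists (nZ M n)"
  define c where "c = (\<lambda>k \<tau>. act M k n (\<tau> - 1) = a \<and> obs M k n \<tau> = ob)"
  have g0: "g > 0" and h0: "h > 0" and x00: "x0 > 0" and y00: "y0 > 0"
    using ok n a ob i j unfolding vparams_ok_def g_def h_def x0_def y0_def by auto
  have j1: "j \<ge> 1" using j by simp
  define F where "F x y = (A - 1) * E_beta x y ln + (B - g / h) * E_beta x y (\<lambda>v. ln (1 - v))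
      + E_stick_prior x y g h - E_beta x y (\<lambda>v. ln (beta_pdf x y v))" for x y
  have main: "ELBO M P0 (Ps x y) = ELBO M P0 P - F x0 y0 + F x y" for x y
  proof -
    define Lb where "Lb = E_beta x y ln - E_beta x0 y0 ln"
    define Lm where "Lm = E_beta x y (\<lambda>v. ln (1 - v)) - E_beta x0 y0 (\<lambda>v. ln (1 - v))"
    define \<delta> where "\<delta> = (\<lambda>k t zs. \<Sum>\<tau>\<in>{1..t}. if c k \<tau> \<and> zs ! (\<tau> - 1) = i
        then (if zs ! \<tau> = j then Lb else 0) + (if j < zs ! \<tau> then Lm else 0) else 0)"
    have om_same: "Elog_omega (Ps x y) n' a' ob' i' j' = Elog_omega P n' a' ob' i' j'"
      if "\<not> (n' = n \<and> a' = a \<and> ob' = ob \<and> i' = i)" for n' a' ob' i' j'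
    proof -
      have "sgm (Ps x y) n' a' ob' i' = sgm P n' a' ob' i'" "lam (Ps x y) n' a' ob' i' = lam P n' a' ob' i'"
        using that by (auto simp: Ps_def)
      then show ?thesis unfolding Elog_omega_def by simp
    qed
    have om_cur: "Elog_omega (Ps x y) n a ob i j' = Elog_omega P n a ob i j' + (if j' = j then Lb else 0) + (if j < j' then Lm else 0)" for j'
    proof -
      have s: "(\<Sum>m\<in>{1..<j'}. E_beta (sgm (Ps x y) n a ob i m) (lam (Ps x y) n a ob i m) (\<lambda>x. ln (1 - x))) =
          (\<Sum>m\<in>{1..<j'}. E_beta (sgm P n a ob i m) (lam P n a ob i m) (\<lambda>x. ln (1 - x))) + (if j < j' then Lm else 0)"
      proof (cases "j < j'")
        case True
        then show ?thesis
          by (subst sum_upd[where i=j]) (use j1 True in \<open>auto simp: Ps_def Lm_def x0_def y0_def\<close>)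
      next
        case False
        then show ?thesis by (auto simp: Ps_def intro!: sum.cong)
      qed
      show ?thesis unfolding Elog_omega_def s
        by (auto simp: Ps_def Lb_def x0_def y0_def)
    qed
    have ej: "Ejoint M (Ps x y) n k t zs = Ejoint M P n k t zs + \<delta> k t zs" for k t zs
    proof -
      have "(\<Sum>\<tau>\<in>{1..t}. Elog_omega (Ps x y) n (act M k n (\<tau> - 1)) (obs M k n \<tau>) (zs ! (\<tau> - 1)) (zs ! \<tau>)) =
        (\<Sum>\<tau>\<in>{1..t}. Elog_omega P n (act M k n (\<tau> - 1)) (obs M k n \<tau>) (zs ! (\<tau> - 1)) (zs ! \<tau>)) + \<delta> k t zs"
        unfolding \<delta>_def sum.distrib[symmetric]
      proof (rule sum.cong[OF refl])
        fix \<tau>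
        show "Elog_omega (Ps x y) n (act M k n (\<tau> - 1)) (obs M k n \<tau>) (zs ! (\<tau> - 1)) (zs ! \<tau>) =
          Elog_omega P n (act M k n (\<tau> - 1)) (obs M k n \<tau>) (zs ! (\<tau> - 1)) (zs ! \<tau>) +
          (if c k \<tau> \<and> zs ! (\<tau> - 1) = i then (if zs ! \<tau> = j then Lb else 0) + (if j < zs ! \<tau> then Lm else 0) else 0)"
        proof (cases "c k \<tau> \<and> zs ! (\<tau> - 1) = i")
          case True
          then show ?thesis using om_cur[of "zs ! \<tau>"] by (simp add: c_def)
        next
          case False
          then show ?thesis using om_same by (auto simp: c_def)
        qed
      qed
      then show ?thesis unfolding Ejoint_def
        by (simp add: Ps_def Elog_eta_def Elog_pi_def)
    qed
    have ej2: "Ejoint M (Ps x y) n' k t zs = Ejoint M P n' k t zs" if "n' \<noteq> n" for n' k t zs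
      using that om_same unfolding Ejoint_def by (simp add: Ps_def Elog_eta_def Elog_pi_def)
    have cD: "cD M P0 (Ps x y) = cD M P0 P + (1 / real (nK M)) * (\<Sum>k\<in>{1..nK M}. \<Sum>t\<le>T M k.
      nu_t M P0 k t * (\<Sum>zs\<in>H t. cond_t M P0 n k t zs * \<delta> k t zs))"
      unfolding H_def by (rule D_change[OF wf n]) (auto simp: ej ej2)
    have step1: "nu_t M P0 k t * (\<Sum>zs\<in>H t. cond_t M P0 n k t zs * \<delta> k t zs) =
        (\<Sum>\<tau>\<in>{1..t}. Lb * (qm2 M P0 n k t \<tau> i j * (if c k \<tau> then 1 else 0))
           + Lm * ((\<Sum>m\<in>{j+1..nZ M n}. qm2 M P0 n k t \<tau> i m) * (if c k \<tau> then 1 else 0)))" for k t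
    proof -
      have fin: "finite (H t)" unfolding H_def by (rule hists_finite)
      have "(\<Sum>zs\<in>H t. cond_t M P0 n k t zs * \<delta> k t zs) =
          (\<Sum>\<tau>\<in>{1..t}. \<Sum>zs\<in>H t. cond_t M P0 n k t zs * (if c k \<tau> \<and> zs ! (\<tau> - 1) = i
        then (if zs ! \<tau> = j then Lb else 0) + (if j < zs ! \<tau> then Lm else 0) else 0))"
        unfolding \<delta>_def by (simp add: sum_distrib_left sum.swap[of _ "H t"])
      also have "\<dots> = (\<Sum>\<tau>\<in>{1..t}. (Lb * (\<Sum>zs\<in>{zs\<in>H t. zs ! (\<tau> - 1) = i \<and> zs ! \<tau> = j}. cond_t M P0 n k t zs) +
           Lm * (\<Sum>m\<in>{j+1..nZ M n}. \<Sum>zs\<in>{zs\<in>H t. zs ! (\<tau> - 1) = i \<and> zs ! \<tau> = m}. cond_t M P0 n k t zs)) * (if c k \<tau> then 1 else 0))"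
      proof (rule sum.cong[OF refl])
        fix \<tau> assume tau: "\<tau> \<in> {1..t}"
        define H' where "H' = {zs\<in>H t. zs ! (\<tau> - 1) = i}"
        have fin': "finite H'" unfolding H'_def using fin by simp
        have e1: "(\<Sum>zs\<in>{zs\<in>H t. zs ! (\<tau> - 1) = i \<and> zs ! \<tau> = j}. cond_t M P0 n k t zs) =
            (\<Sum>zs\<in>H t. if zs ! (\<tau> - 1) = i \<and> zs ! \<tau> = j then cond_t M P0 n k t zs else 0)"
          using fin by (simp add: sum.inter_filter)
        have e2: "(\<Sum>m\<in>{j+1..nZ M n}. \<Sum>zs\<in>{zs\<in>H t. zs ! (\<tau> - 1) = i \<and> zs ! \<tau> = m}. cond_t M P0 n k t zs) =
            (\<Sum>zs\<in>H t. if zs ! (\<tau> - 1) = i \<and> j < zs ! \<tau> then cond_t M P0 n k t zs else 0)"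
        proof -
          have "(\<Sum>m\<in>{j+1..nZ M n}. \<Sum>zs\<in>{zs\<in>H t. zs ! (\<tau> - 1) = i \<and> zs ! \<tau> = m}. cond_t M P0 n k t zs) =
              (\<Sum>m\<in>{j+1..nZ M n}. \<Sum>zs\<in>{zs\<in>H'. zs ! \<tau> = m}. cond_t M P0 n k t zs)"
            unfolding H'_def by (intro sum.cong refl) auto
          also have "\<dots> = (\<Sum>zs\<in>H'. if zs ! \<tau> \<in> {j+1..nZ M n} then cond_t M P0 n k t zs else 0)"
            by (rule sum_group_filter[OF finite_atLeastAtMost fin'])
          also have "\<dots> = (\<Sum>zs\<in>H'. if j < zs ! \<tau> then cond_t M P0 n k t zs else 0)"
          proof (rule sum.cong[OF refl])
            fix zs assume "zs \<in> H'"
            then have "zs ! \<tau> \<in> {1..nZ M n}" unfolding H'_def H_def using hists_nth tau by auto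
            then show "(if zs ! \<tau> \<in> {j+1..nZ M n} then cond_t M P0 n k t zs else 0) = (if j < zs ! \<tau> then cond_t M P0 n k t zs else 0)"
              by auto
          qed
          also have "\<dots> = (\<Sum>zs\<in>H t. if zs ! (\<tau> - 1) = i \<and> j < zs ! \<tau> then cond_t M P0 n k t zs else 0)"
            unfolding H'_def using fin by (simp add: sum.inter_filter) (rule sum.cong, auto)
          finally show ?thesis .
        qed
        show "(\<Sum>zs\<in>H t. cond_t M P0 n k t zs * (if c k \<tau> \<and> zs ! (\<tau> - 1) = i
            then (if zs ! \<tau> = j then Lb else 0) + (if j < zs ! \<tau> then Lm else 0) else 0)) =
          (Lb * (\<Sum>zs\<in>{zs\<in>H t. zs ! (\<tau> - 1) = i \<and> zs ! \<tau> = j}. cond_t M P0 n k t zs) +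
           Lm * (\<Sum>m\<in>{j+1..nZ M n}. \<Sum>zs\<in>{zs\<in>H t. zs ! (\<tau> - 1) = i \<and> zs ! \<tau> = m}. cond_t M P0 n k t zs)) * (if c k \<tau> then 1 else 0)"
        proof (cases "c k \<tau>")
          case True
          have "(\<Sum>zs\<in>H t. cond_t M P0 n k t zs * (if c k \<tau> \<and> zs ! (\<tau> - 1) = i
            then (if zs ! \<tau> = j then Lb else 0) + (if j < zs ! \<tau> then Lm else 0) else 0)) =
            (\<Sum>zs\<in>H t. Lb * (if zs ! (\<tau> - 1) = i \<and> zs ! \<tau> = j then cond_t M P0 n k t zs else 0) +
                      Lm * (if zs ! (\<tau> - 1) = i \<and> j < zs ! \<tau> then cond_t M P0 n k t zs else 0))"
            by (rule sum.cong) (auto simp: True algebra_simps)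
          also have "\<dots> = Lb * (\<Sum>zs\<in>H t. if zs ! (\<tau> - 1) = i \<and> zs ! \<tau> = j then cond_t M P0 n k t zs else 0) +
              Lm * (\<Sum>zs\<in>H t. if zs ! (\<tau> - 1) = i \<and> j < zs ! \<tau> then cond_t M P0 n k t zs else 0)"
            by (simp add: sum.distrib sum_distrib_left)
          finally have fin2: "(\<Sum>zs\<in>H t. cond_t M P0 n k t zs * (if c k \<tau> \<and> zs ! (\<tau> - 1) = i
            then (if zs ! \<tau> = j then Lb else 0) + (if j < zs ! \<tau> then Lm else 0) else 0)) =
            Lb * (\<Sum>zs\<in>H t. if zs ! (\<tau> - 1) = i \<and> zs ! \<tau> = j then cond_t M P0 n k t zs else 0) +
              Lm * (\<Sum>zs\<in>H t. if zs ! (\<tau> - 1) = i \<and> j < zs ! \<tau> then cond_t M P0 n k t zs else 0)" .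
          show ?thesis unfolding e1 e2 fin2 using True by simp
        next
          case False
          then show ?thesis by simp
        qed
      qed
      finally have eq: "(\<Sum>zs\<in>H t. cond_t M P0 n k t zs * \<delta> k t zs) = (\<Sum>\<tau>\<in>{1..t}. (Lb * (\<Sum>zs\<in>{zs\<in>H t. zs ! (\<tau> - 1) = i \<and> zs ! \<tau> = j}. cond_t M P0 n k t zs) +
           Lm * (\<Sum>m\<in>{j+1..nZ M n}. \<Sum>zs\<in>{zs\<in>H t. zs ! (\<tau> - 1) = i \<and> zs ! \<tau> = m}. cond_t M P0 n k t zs)) * (if c k \<tau> then 1 else 0))" .
      have qj: "nu_t M P0 k t * (\<Sum>zs\<in>{zs\<in>H t. zs ! (\<tau> - 1) = i \<and> zs ! \<tau> = m}. cond_t M P0 n k t zs) = qm2 M P0 n k t \<tau> i m" for \<tau> m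
        unfolding qm2_def H_def ..
      show ?thesis unfolding eq
        by (subst sum_distrib_left) (intro sum.cong refl, simp add: qj[symmetric] sum_distrib_left algebra_simps)
    qed
    have Dval: "(1 / real (nK M)) * (\<Sum>k\<in>{1..nK M}. \<Sum>t\<le>T M k.
      nu_t M P0 k t * (\<Sum>zs\<in>H t. cond_t M P0 n k t zs * \<delta> k t zs)) = (A - 1) * Lb + (B - g / h) * Lm"
    proof -
      have "(1 / real (nK M)) * (\<Sum>k\<in>{1..nK M}. \<Sum>t\<le>T M k.
          nu_t M P0 k t * (\<Sum>zs\<in>H t. cond_t M P0 n k t zs * \<delta> k t zs))
        = Lb * (\<Sum>k\<in>{1..nK M}. 1 / real (nK M) * (\<Sum>t\<le>T M k. \<Sum>\<tau>\<in>{1..t}. qm2 M P0 n k t \<tau> i j * (if c k \<tau> then 1 else 0)))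
          + Lm * (\<Sum>k\<in>{1..nK M}. 1 / real (nK M) * (\<Sum>t\<le>T M k. \<Sum>\<tau>\<in>{1..t}. (\<Sum>m\<in>{j+1..nZ M n}. qm2 M P0 n k t \<tau> i m) * (if c k \<tau> then 1 else 0)))"
        unfolding step1 by (simp add: sum.distrib sum_distrib_left algebra_simps)
      also have "\<dots> = (A - 1) * Lb + (B - g / h) * Lm"
      proof -
        have cA: "(\<Sum>k\<in>{1..nK M}. 1 / real (nK M) * (\<Sum>t\<le>T M k. \<Sum>\<tau>\<in>{1..t}. qm2 M P0 n k t \<tau> i j * (if c k \<tau> then 1 else 0))) = A - 1"
          unfolding A_def upd_sgm_def c_def by simp
        have cB: "(\<Sum>k\<in>{1..nK M}. 1 / real (nK M) * (\<Sum>t\<le>T M k. \<Sum>\<tau>\<in>{1..t}. (\<Sum>m\<in>{j+1..nZ M n}. qm2 M P0 n k t \<tau> i m) * (if c k \<tau> then 1 else 0))) = B - g / h"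
          unfolding B_def upd_lam_def c_def g_def h_def by (simp add: sum_distrib_right)
        show ?thesis unfolding cA cB by (simp add: mult.commute)
      qed
      finally show ?thesis .
    qed
    have cS2: "cS2 M (Ps x y) = cS2 M P + (E_stick_prior x y g h - E_stick_prior x0 y0 g h)"
      unfolding cS2_def
      apply (rule sum_upd'[where i=n])
         apply simp
        apply (use n in simp)
       apply (simp add: Ps_def)
      apply (rule sum_upd'[where i=a])
         apply simp
        apply (use a in simp)
       apply (simp add: Ps_def)
      apply (rule sum_upd'[where i=ob])
         apply simp
        apply (use ob in simp)
       apply (simp add: Ps_def)
      apply (rule sum_upd'[where i=i])
         apply simp
        apply (use i in simp)
       apply (simp add: Ps_def)
      apply (rule sum_upd'[where i=j])
         apply simp
        apply (use j in simp)
       apply (simp add: Ps_def)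
      apply (simp add: Ps_def g_def h_def x0_def y0_def)
      done
    have cH2: "cH2 M (Ps x y) = cH2 M P + (E_beta x y (\<lambda>v. ln (beta_pdf x y v)) - E_beta x0 y0 (\<lambda>v. ln (beta_pdf x0 y0 v)))"
      unfolding cH2_def
      apply (rule sum_upd'[where i=n])
         apply simp
        apply (use n in simp)
       apply (simp add: Ps_def)
      apply (rule sum_upd'[where i=a])
         apply simp
        apply (use a in simp)
       apply (simp add: Ps_def)
      apply (rule sum_upd'[where i=ob])
         apply simp
        apply (use ob in simp)
       apply (simp add: Ps_def)
      apply (rule sum_upd'[where i=i])
         apply simp
        apply (use i in simp)
       apply (simp add: Ps_def)
      apply (rule sum_upd'[where i=j])
         apply simp
        apply (use j in simp)
       apply (simp add: Ps_def)
      apply (simp add: Ps_def x0_def y0_def)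
      done
    have same: "cS1 M (Ps x y) = cS1 M P" "cPi M (Ps x y) = cPi M P" "cG1 M (Ps x y) = cG1 M P"
      "cG2 M (Ps x y) = cG2 M P" "cH1 M (Ps x y) = cH1 M P" "cH3 M (Ps x y) = cH3 M P"
      "cH4 M (Ps x y) = cH4 M P" "cH5 M (Ps x y) = cH5 M P"
      by (simp_all add: Ps_def cS1_def cPi_def cG1_def cG2_def cH1_def cH3_def cH4_def cH5_def)
    show ?thesis
      unfolding ELBO_split[of M P0 "Ps x y"] ELBO_split[of M P0 P] same cS2 cH2 cD Dval
      unfolding F_def Lb_def Lm_def by (simp add: algebra_simps)
  qed
  have qm2p: "\<And>k t \<tau> i' j'. k \<in> {1..nK M} \<Longrightarrow> t \<le> T M k \<Longrightarrow> qm2 M P0 n k t \<tau> i' j' \<ge> 0"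
    using qm2_nonneg[OF wf] by blast
  have s1: "0 \<le> (\<Sum>k\<in>{1..nK M}. 1 / real (nK M) * (\<Sum>t\<le>T M k. \<Sum>\<tau>\<in>{1..t}.
        qm2 M P0 n k t \<tau> i j * (if act M k n (\<tau> - 1) = a \<and> obs M k n \<tau> = ob then 1 else 0)))"
    by (intro sum_nonneg mult_nonneg_nonneg) (auto intro!: qm2p)
  have s2: "0 \<le> (\<Sum>k\<in>{1..nK M}. 1 / real (nK M) * (\<Sum>t\<le>T M k. \<Sum>\<tau>\<in>{1..t}. \<Sum>m\<in>{j+1..nZ M n}.
        qm2 M P0 n k t \<tau> i m * (if act M k n (\<tau> - 1) = a \<and> obs M k n \<tau> = ob then 1 else 0)))"
    by (intro sum_nonneg mult_nonneg_nonneg) (auto intro!: qm2p)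
  have A1: "A \<ge> 1" unfolding A_def upd_sgm_def using s1 by simp
  have Bg: "B \<ge> g / h" unfolding B_def upd_lam_def g_def h_def using s2 by simp
  have A0: "A > 0" using A1 by simp
  have B0: "B > 0" using Bg g0 h0 by (smt (verit) divide_pos_pos)
  have Fval: "F x y = (A-1) * E_beta x y ln + (B-1) * E_beta x y (\<lambda>v. ln (1-v)) - E_beta x y (\<lambda>v. ln (beta_pdf x y v))
     + E_gamma g h ln" if "x > 0" "y > 0" for x y
    unfolding F_def E_stick[OF that g0 h0] by (simp add: algebra_simps)
  show ?thesis unfolding is_argmax_def Ps_def[symmetric] A_def[symmetric] B_def[symmetric]
  proof (intro conjI ballI)
    show "(A, B) \<in> {(x, y). 0 < x \<and> 0 < y}" using A0 B0 by simp
  next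
    fix p :: "real \<times> real" assume "p \<in> {(x, y). 0 < x \<and> 0 < y}"
    then obtain x y :: real where p: "p = (x, y)" and x: "x > 0" and y: "y > 0" by auto
    have "F x y \<le> F A B"
      unfolding Fval[OF x y] Fval[OF A0 B0] using beta_argmax[OF A0 B0 x y] by simp
    then show "(case p of (x, y) \<Rightarrow> ELBO M P0 (Ps x y)) \<le> (case (A, B) of (x, y) \<Rightarrow> ELBO M P0 (Ps x y))"
      unfolding p by (simp add: main)
  qed
qed


theorem theorem1:
  fixes M :: model and P0 P :: vparams
  assumes "wf_model M" and "vparams_ok M P0" and "vparams_ok M P"
  shows
   "(\<forall>n\<in>{1..nAg M}. \<forall>i\<in>{1..nZ M n}.
      is_argmax
        (\<lambda>(x, y). ELBO M P0 (P\<lparr>dlt := (dlt P)(n := (dlt P n)(i := x)),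
                                mu := (mu P)(n := (mu P n)(i := y))\<rparr>))
        {(x, y). 0 < x \<and> 0 < y}
        (upd_dlt M P0 n i, upd_mu M P0 P n i))
  \<and> (\<forall>n\<in>{1..nAg M}. \<forall>i\<in>{1..nZ M n}.
      is_argmax
        (\<lambda>x. ELBO M P0 (P\<lparr>phi := (phi P)(n := (phi P n)(i := x))\<rparr>))
        (PiE {..<nA M n} (\<lambda>_. {0<..}))
        (upd_phi M P0 n i))
  \<and> (\<forall>n\<in>{1..nAg M}. \<forall>a<nA M n. \<forall>ob<nO M n. \<forall>i\<in>{1..nZ M n}. \<forall>j\<in>{1..nZ M n}.
      is_argmax
        (\<lambda>(x, y). ELBO M P0 (P\<lparr>sgm := (sgm P)(n := (sgm P n)(a := (sgm P n a)(ob := (sgm P n a ob)(i := (sgm P n a ob i)(j := x))))),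
                                lam := (lam P)(n := (lam P n)(a := (lam P n a)(ob := (lam P n a ob)(i := (lam P n a ob i)(j := y)))))\<rparr>))
        {(x, y). 0 < x \<and> 0 < y}
        (upd_sgm M P0 n a ob i j, upd_lam M P0 P n a ob i j))
  \<and> (\<forall>n\<in>{1..nAg M}.
      is_argmax
        (\<lambda>(x, y). ELBO M P0 (P\<lparr>gg := (gg P)(n := x), hh := (hh P)(n := y)\<rparr>))
        {(x, y). 0 < x \<and> 0 < y}
        (upd_g M n, upd_h M P n))
  \<and> (\<forall>n\<in>{1..nAg M}. \<forall>a<nA M n. \<forall>ob<nO M n. \<forall>i\<in>{1..nZ M n}.
      is_argmax
        (\<lambda>(x, y). ELBO M P0 (P\<lparr>aa := (aa P)(n := (aa P n)(a := (aa P n a)(ob := (aa P n a ob)(i := x)))),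
                                bb := (bb P)(n := (bb P n)(a := (bb P n a)(ob := (bb P n a ob)(i := y))))\<rparr>))
        {(x, y). 0 < x \<and> 0 < y}
        (upd_a M n a ob, upd_b M P n a ob i))"
proof (intro conjI)
  show "\<forall>n\<in>{1..nAg M}. \<forall>i\<in>{1..nZ M n}.
      is_argmax
        (\<lambda>(x, y). ELBO M P0 (P\<lparr>dlt := (dlt P)(n := (dlt P n)(i := x)),
                                mu := (mu P)(n := (mu P n)(i := y))\<rparr>))
        {(x, y). 0 < x \<and> 0 < y}
        (upd_dlt M P0 n i, upd_mu M P0 P n i)"
    using part1[OF assms(1) assms(3)] by blast
  show "\<forall>n\<in>{1..nAg M}. \<forall>i\<in>{1..nZ M n}.
      is_argmax
        (\<lambda>x. ELBO M P0 (P\<lparr>phi := (phi P)(n := (phi P n)(i := x))\<rparr>))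
        (PiE {..<nA M n} (\<lambda>_. {0<..}))
        (upd_phi M P0 n i)"
    using part2[OF assms(1) assms(3)] by blast
  show "\<forall>n\<in>{1..nAg M}. \<forall>a<nA M n. \<forall>ob<nO M n. \<forall>i\<in>{1..nZ M n}. \<forall>j\<in>{1..nZ M n}.
      is_argmax
        (\<lambda>(x, y). ELBO M P0 (P\<lparr>sgm := (sgm P)(n := (sgm P n)(a := (sgm P n a)(ob := (sgm P n a ob)(i := (sgm P n a ob i)(j := x))))),
                                lam := (lam P)(n := (lam P n)(a := (lam P n a)(ob := (lam P n a ob)(i := (lam P n a ob i)(j := y)))))\<rparr>))
        {(x, y). 0 < x \<and> 0 < y}
        (upd_sgm M P0 n a ob i j, upd_lam M P0 P n a ob i j)"
    using part3[OF assms(1) assms(3)] by blast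
  show "\<forall>n\<in>{1..nAg M}.
      is_argmax
        (\<lambda>(x, y). ELBO M P0 (P\<lparr>gg := (gg P)(n := x), hh := (hh P)(n := y)\<rparr>))
        {(x, y). 0 < x \<and> 0 < y}
        (upd_g M n, upd_h M P n)"
    using part4[OF assms(1) assms(3)] by blast
  show "\<forall>n\<in>{1..nAg M}. \<forall>a<nA M n. \<forall>ob<nO M n. \<forall>i\<in>{1..nZ M n}.
      is_argmax
        (\<lambda>(x, y). ELBO M P0 (P\<lparr>aa := (aa P)(n := (aa P n)(a := (aa P n a)(ob := (aa P n a ob)(i := x)))),
                                bb := (bb P)(n := (bb P n)(a := (bb P n a)(ob := (bb P n a ob)(i := y))))\<rparr>))
        {(x, y). 0 < x \<and> 0 < y}
        (upd_a M n a ob, upd_b M P n a ob i)"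
    using part5[OF assms(1) assms(3)] by blast
qed

end
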